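(* For any constellation $[\mathbb{X},\mathbb{P}]$ (natural binary code labeling, bit probabilities $P_{C_k}(0)\in(0,1)$), the low-GMI parameters $[\boldsymbol{\mu},E_s,\alpha]$ of $[\mathbb{X},\mathbb{P}]$ are equal to the low-GMI parameters of the constellation $[\mathring{\mathbb{X}},\mathbb{U}_m]$, where $\mathring{\mathbb{X}}$ is the transform of $\mathbb{X}$ with respect to the bit probabilities of $\mathbb{P}$ and $\mathbb{U}_m$ is the uniform distribution.
   Context: Let $m\ge1$, $M=2^m$, $N\ge1$. For $0\le i\le M-1$, $n_{i,k}\in\{0,1\}$ is the $k$-th bit of $i$ ($i=\sum_k n_{i,k}2^k$), and $\bar b=1-b$. A constellation $[\mathbb{X},\mathbb{P}]$ consists of an alphabet $\mathbb{X}$ with rows $\boldsymbol{x}_0,\ldots,\boldsymbol{x}_{M-1}\in\mathbb{R}^N$, symbol $\boldsymbol{x}_i$ carrying the label $(n_{i,0},\ldots,n_{i,m-1})$, and distribution $P_i=\prod_kP_{C_k}(n_{i,k})$ determined by bit probabilities $P_{C_k}(0)$, $P_{C_k}(1)=1-P_{C_k}(0)$; i.e. independent bits $C_k$ with $\Pr(C_k=u)=P_{C_k}(u)$ select $\boldsymbol{X}=\boldsymbol{x}_i$, $i=\sum_kC_k2^k$. $\mathbb{U}_m$ is the case $P_{C_k}(0)=1/2$ for all $k$ (all $P_i=1/M$). The transform $\mathring{\mathbb{X}}$ has rows $\mathring{\boldsymbol{x}}_i=\sum_j\boldsymbol{x}_j\gamma_{i,j}\sqrt{P_j}$ with $\gamma_{i,j}=\prod_{k}\big[(-1)^{\bar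 n_{i,k}n_{j,k}}\sqrt{P_{C_k}(0)}+(-1)^{n_{i,k}\bar n_{j,k}}\sqrt{P_{C_k}(1)}\big]$. Channel: $\boldsymbol{Y}=\boldsymbol{H}\circ\boldsymbol{X}+\boldsymbol{Z}$, $\boldsymbol{Z}$ zero-mean Gaussian with variance $N_0/2$ per dimension, $\boldsymbol{H}$ real fading vector with common marginal pdf $p_H$, known at the receiver (standard regularity conditions assumed). $\mathrm{SNR}=\mathbb{E}[H^2]E_s/N_0$. BICM-GMI: $I(\mathrm{SNR})=\sum_kI(C_k;\boldsymbol{Y}\mid\boldsymbol{H})$ in bits, as a function of SNR. Low-GMI parameters: $\boldsymbol{\mu}=\mathbb{E}[\boldsymbol{X}]$, $E_s=\mathbb{E}[\|\boldsymbol{X}\|^2]$, $\alpha=\frac{dI}{d\,\mathrm{SNR}}\big|_{\mathrm{SNR}=0}$. *)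

theory Defs
  imports "HOL-Analysis.Analysis" "HOL-Probability.Probability"
begin

text \<open>Natural binary code: k-th bit of symbol index i.\<close>
definition nbit :: "nat \<Rightarrow> nat \<Rightarrow> nat" where
  "nbit i k = (i div 2 ^ k) mod 2"

definition bitprob :: "(nat \<Rightarrow> real) \<Rightarrow> nat \<Rightarrow> nat \<Rightarrow> real" where
  "bitprob p k u = (if u = 0 then p k else 1 - p k)"

definition symprob :: "nat \<Rightarrow> (nat \<Rightarrow> real) \<Rightarrow> nat \<Rightarrow> real" where
  "symprob m p i = (\<Prod>k<m. bitprob p k (nbit i k))"

definition uniform_bits :: "nat \<Rightarrow> real" where
  "uniform_bits k = 1 / 2"

definition gamma_coef :: "nat \<Rightarrow> (nat \<Rightarrow> real) \<Rightarrow> nat \<Rightarrow> nat \<Rightarrow> real" where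
  "gamma_coef m p i j = (\<Prod>k<m.
      (-1) ^ ((1 - nbit i k) * nbit j k) * sqrt (p k)
    + (-1) ^ (nbit i k * (1 - nbit j k)) * sqrt (1 - p k))"

definition transform :: "nat \<Rightarrow> (nat \<Rightarrow> real) \<Rightarrow> (nat \<Rightarrow> real ^ 'n) \<Rightarrow> nat \<Rightarrow> real ^ 'n" where
  "transform m p x i = (\<Sum>j<2 ^ m. (gamma_coef m p i j * sqrt (symprob m p j)) *\<^sub>R x j)"

definition mean_sym :: "nat \<Rightarrow> (nat \<Rightarrow> real) \<Rightarrow> (nat \<Rightarrow> real ^ 'n) \<Rightarrow> real ^ 'n" where
  "mean_sym m p x = (\<Sum>i<2 ^ m. symprob m p i *\<^sub>R x i)"

definition energy_sym :: "nat \<Rightarrow> (nat \<Rightarrow> real) \<Rightarrow> (nat \<Rightarrow> real ^ 'n) \<Rightarrow> real" where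
  "energy_sym m p x = (\<Sum>i<2 ^ m. symprob m p i * (norm (x i))\<^sup>2)"

text \<open>Channel transition density p(y | X = xv, H = h), noise variance N0/2 per dimension.\<close>
definition gauss_ch :: "real \<Rightarrow> real ^ 'n \<Rightarrow> real ^ 'n \<Rightarrow> real ^ 'n \<Rightarrow> real" where
  "gauss_ch N0 h xv y = (\<Prod>n\<in>UNIV. exp (- ((y $ n - h $ n * xv $ n)\<^sup>2) / N0) / sqrt (pi * N0))"

definition out_dens :: "nat \<Rightarrow> (nat \<Rightarrow> real) \<Rightarrow> (nat \<Rightarrow> real ^ 'n) \<Rightarrow> real
    \<Rightarrow> real ^ 'n \<Rightarrow> real ^ 'n \<Rightarrow> real" where
  "out_dens m p x N0 h y = (\<Sum>i<2 ^ m. symprob m p i * gauss_ch N0 h (x i) y)"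

definition cond_dens :: "nat \<Rightarrow> (nat \<Rightarrow> real) \<Rightarrow> (nat \<Rightarrow> real ^ 'n) \<Rightarrow> real
    \<Rightarrow> nat \<Rightarrow> nat \<Rightarrow> real ^ 'n \<Rightarrow> real ^ 'n \<Rightarrow> real" where
  "cond_dens m p x N0 k u h y =
     (\<Sum>i\<in>{i. i < 2 ^ m \<and> nbit i k = u}. symprob m p i * gauss_ch N0 h (x i) y) / bitprob p k u"

text \<open>I(C_k; Y | H) in bits, H distributed according to HD (independent of X).\<close>
definition bit_mi :: "nat \<Rightarrow> (nat \<Rightarrow> real) \<Rightarrow> (nat \<Rightarrow> real ^ 'n) \<Rightarrow> real
    \<Rightarrow> (real ^ 'n) measure \<Rightarrow> nat \<Rightarrow> real" where
  "bit_mi m p x N0 HD k =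
     (\<integral>h. (\<Sum>u\<in>{0, 1}. bitprob p k u *
        (\<integral>y. cond_dens m p x N0 k u h y *
               log 2 (cond_dens m p x N0 k u h y / out_dens m p x N0 h y) \<partial>lborel)) \<partial>HD)"

definition bicm_gmi :: "nat \<Rightarrow> (nat \<Rightarrow> real) \<Rightarrow> (nat \<Rightarrow> real ^ 'n) \<Rightarrow> real
    \<Rightarrow> (real ^ 'n) measure \<Rightarrow> real" where
  "bicm_gmi m p x N0 HD = (\<Sum>k<m. bit_mi m p x N0 HD k)"

definition sec_moment :: "(real \<Rightarrow> real) \<Rightarrow> real" where
  "sec_moment pH = (\<integral>t. t\<^sup>2 * pH t \<partial>lborel)"

text \<open>GMI as a function of SNR = E[H^2] E_s / N0; value 0 at SNR = 0.\<close>
definition gmi_of_snr :: "nat \<Rightarrow> (nat \<Rightarrow> real) \<Rightarrow> (nat \<Rightarrow> real ^ 'n) \<Rightarrow> real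
    \<Rightarrow> (real ^ 'n) measure \<Rightarrow> real \<Rightarrow> real" where
  "gmi_of_snr m p x EH2 HD snr =
     (if snr \<le> 0 then 0 else bicm_gmi m p x (EH2 * energy_sym m p x / snr) HD)"

definition low_gmi_alpha :: "nat \<Rightarrow> (nat \<Rightarrow> real) \<Rightarrow> (nat \<Rightarrow> real ^ 'n) \<Rightarrow> real
    \<Rightarrow> (real ^ 'n) measure \<Rightarrow> real \<Rightarrow> bool" where
  "low_gmi_alpha m p x EH2 HD a \<longleftrightarrow>
     (gmi_of_snr m p x EH2 HD has_real_derivative a) (at 0 within {0..})"

end

theory Submission
  imports Defs
begin


lemma nbit_small: "i < 2^m \<Longrightarrow> m \<le> k \<Longrightarrow> nbit i k = 0"
proof -
  assume "i < 2^m" "m \<le> k"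
  then have "i < 2^k" by (meson less_le_trans one_le_numeral power_increasing)
  then show ?thesis by (simp add: nbit_def)
qed

lemma nbit_lt: assumes "i < 2^m" shows "nbit (i + 2^m) k = (if k = m then 1 else nbit i k)"
proof (cases "k < m")
  case True
  have "2^m = (2::nat)^k * 2^(m-k)" using True by (simp flip: power_add)
  then have "(i + 2^m) div 2^k = i div 2^k + 2^(m-k)" by simp
  moreover have "(2::nat)^(m-k) = 2 * 2^(m-k-1)" using True by (simp flip: power_Suc)
  ultimately have "(i + 2^m) div 2^k mod 2 = i div 2^k mod 2" by simp
  then show ?thesis using True by (simp add: nbit_def)
next
  case False
  show ?thesis
  proof (cases "k = m")
    case True
    then show ?thesis using assms by (simp add: nbit_def)
  next
    case F2: False
    then have "m < k" using False by simp
    have "i + 2^m < 2^k"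
    proof -
      have "i + 2^m < 2^(Suc m)" using assms by simp
      also have "\<dots> \<le> 2^k" using \<open>m<k\<close> by (intro power_increasing) auto
      finally show ?thesis .
    qed
    then show ?thesis using F2 nbit_small[OF assms] \<open>m<k\<close> by (simp add: nbit_def)
  qed
qed

lemma sum_prod_bits:
  fixes f :: "nat \<Rightarrow> nat \<Rightarrow> 'a::comm_ring_1"
  shows "(\<Sum>i<2^m. \<Prod>k<m. f k (nbit i k)) = (\<Prod>k<m. f k 0 + f k 1)"
proof (induction m)
  case 0 then show ?case by (simp add: nbit_def)
next
  case (Suc m)
  have split: "{..<2^Suc m} = {..<(2::nat)^m} \<union> (\<lambda>i. i + 2^m) ` {..<2^m}"
  proof (rule set_eqI, rule iffI)
    fix i assume i: "i \<in> {..<(2::nat)^Suc m}"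
    show "i \<in> {..<(2::nat)^m} \<union> (\<lambda>i. i + 2^m) ` {..<2^m}"
    proof (cases "i < 2^m")
      case False
      then have "i = (i - 2^m) + 2^m" "i - 2^m < 2^m" using i by auto
      then show ?thesis by blast
    qed simp
  qed auto
  have disj: "{..<(2::nat)^m} \<inter> (\<lambda>i. i + 2^m) ` {..<2^m} = {}" by auto
  have inj: "inj_on (\<lambda>i::nat. i + 2^m) {..<2^m}" by (simp add: inj_on_def)
  let ?g = "\<lambda>i. \<Prod>k<Suc m. f k (nbit i k)"
  have "sum ?g {..<2^Suc m} = sum ?g {..<2^m} + sum ?g ((\<lambda>i. i + 2^m) ` {..<2^m})"
    unfolding split by (rule sum.union_disjoint) (use disj in auto)
  also have "sum ?g ((\<lambda>i. i + 2^m) ` {..<2^m}) = (\<Sum>i<2^m. ?g (i + 2^m))"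
    by (rule sum.reindex[OF inj, unfolded comp_def])
  also have "sum ?g {..<2^m} = (\<Sum>i<2^m. (\<Prod>k<m. f k (nbit i k)) * f m 0)"
  proof (rule sum.cong[OF refl])
    fix i assume "i \<in> {..<(2::nat)^m}"
    then show "?g i = (\<Prod>k<m. f k (nbit i k)) * f m 0" by (simp add: nbit_small)
  qed
  also have "(\<Sum>i<2^m. ?g (i + 2^m)) = (\<Sum>i<2^m. (\<Prod>k<m. f k (nbit i k)) * f m 1)"
  proof (rule sum.cong[OF refl])
    fix i assume i: "i \<in> {..<(2::nat)^m}"
    have "?g (i + 2^m) = (\<Prod>k<m. f k (nbit (i+2^m) k)) * f m 1" using i by (simp add: nbit_lt)
    also have "(\<Prod>k<m. f k (nbit (i+2^m) k)) = (\<Prod>k<m. f k (nbit i k))"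
      using i by (intro prod.cong) (auto simp: nbit_lt)
    finally show "?g (i + 2^m) = (\<Prod>k<m. f k (nbit i k)) * f m 1" .
  qed
  also have "(\<Sum>i<2^m. (\<Prod>k<m. f k (nbit i k)) * f m 0) + (\<Sum>i<2^m. (\<Prod>k<m. f k (nbit i k)) * f m 1)
     = (\<Prod>k<m. f k 0 + f k 1) * (f m 0 + f m 1)"
    by (simp only: Suc flip: sum_distrib_right distrib_left)
  also have "\<dots> = (\<Prod>k<Suc m. f k 0 + f k 1)" by simp
  finally show ?case .
qed

lemma nbit_cases: "nbit i k = 0 \<or> nbit i k = 1"
  unfolding nbit_def by presburger

lemma sqrt_prod_real: "sqrt (prod f A) = (\<Prod>k\<in>A. sqrt (f k))"
  by (induction A rule: infinite_finite_induct) (auto simp: real_sqrt_mult)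

definition G :: "(nat \<Rightarrow> real) \<Rightarrow> nat \<Rightarrow> nat \<Rightarrow> nat \<Rightarrow> real" where
  "G p k c d = (-1) ^ ((1 - c) * d) * sqrt (p k) + (-1) ^ (c * (1 - d)) * sqrt (1 - p k)"

lemma gamma_G: "gamma_coef m p i j = (\<Prod>k<m. G p k (nbit i k) (nbit j k))"
  by (simp add: gamma_coef_def G_def)

lemma sqrt_symprob: "sqrt (symprob m p j) = (\<Prod>k<m. sqrt (bitprob p k (nbit j k)))"
  by (simp add: symprob_def sqrt_prod_real)

lemma symprob_unif: "symprob m uniform_bits i = (1/2)^m"
proof -
  have "symprob m uniform_bits i = (\<Prod>k<m. (1/2::real))"
    unfolding symprob_def by (intro prod.cong refl) (simp add: bitprob_def uniform_bits_def)
  then show ?thesis by simp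
qed

lemma G_sum: "G p k 0 d + G p k 1 d = 2 * sqrt (bitprob p k d)" if "d = 0 \<or> d = 1"
  using that by (auto simp: G_def bitprob_def)

lemma col_sum: "(\<Sum>i<2^m. (1/2)^m * gamma_coef m p i j) = sqrt (symprob m p j)"
proof -
  have "(\<Sum>i<2^m. (1/2)^m * gamma_coef m p i j) = (\<Sum>i<2^m. \<Prod>k<m. (1/2) * G p k (nbit i k) (nbit j k))"
    unfolding gamma_G by (intro sum.cong refl, subst prod.distrib) simp
  also have "\<dots> = (\<Prod>k<m. (1/2) * G p k 0 (nbit j k) + (1/2) * G p k 1 (nbit j k))"
    by (rule sum_prod_bits)
  also have "\<dots> = (\<Prod>k<m. sqrt (bitprob p k (nbit j k)))"
  proof (intro prod.cong refl)
    fix k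
    have "(1/2) * G p k 0 (nbit j k) + (1/2) * G p k 1 (nbit j k) = (1/2) * (G p k 0 (nbit j k) + G p k 1 (nbit j k))"
      by (simp only: distrib_left)
    then show "(1/2) * G p k 0 (nbit j k) + (1/2) * G p k 1 (nbit j k) = sqrt (bitprob p k (nbit j k))"
      by (simp only: G_sum[OF nbit_cases])
  qed
  finally show ?thesis by (simp add: sqrt_symprob)
qed

lemma symprob_nonneg: "\<forall>k<m. 0 \<le> p k \<and> p k \<le> 1 \<Longrightarrow> 0 \<le> symprob m p i"
  unfolding symprob_def bitprob_def by (intro prod_nonneg) auto

lemma mean_eq: assumes "\<forall>k<m. 0 \<le> p k \<and> p k \<le> 1"
  shows "mean_sym m p x = mean_sym m uniform_bits (transform m p x)"
proof -
  have "mean_sym m uniform_bits (transform m p x)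
      = (\<Sum>i<2^m. \<Sum>j<2^m. ((1/2)^m * gamma_coef m p i j * sqrt (symprob m p j)) *\<^sub>R x j)"
    by (simp add: mean_sym_def transform_def symprob_unif scaleR_sum_right mult.assoc)
  also have "\<dots> = (\<Sum>j<2^m. \<Sum>i<2^m. ((1/2)^m * gamma_coef m p i j * sqrt (symprob m p j)) *\<^sub>R x j)"
    by (rule sum.swap)
  also have "\<dots> = (\<Sum>j<2^m. ((\<Sum>i<2^m. (1/2)^m * gamma_coef m p i j) * sqrt (symprob m p j)) *\<^sub>R x j)"
    by (simp add: scaleR_sum_left sum_distrib_right)
  also have "\<dots> = (\<Sum>j<2^m. (sqrt (symprob m p j) * sqrt (symprob m p j)) *\<^sub>R x j)"
    by (simp add: col_sum)
  also have "\<dots> = mean_sym m p x"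
    unfolding mean_sym_def using assms by (intro sum.cong refl) (simp add: symprob_nonneg)
  finally show ?thesis by simp
qed

lemma nbit_inj: assumes "j < 2^m" "l < 2^m" "\<forall>k<m. nbit j k = nbit l k" shows "j = l"
proof -
  have "bit j n = bit l n" for n
  proof -
    have "nbit j n = nbit l n"
      using assms by (cases "n < m") (auto simp: nbit_small)
    then show "bit j n = bit l n" by (simp add: nbit_def bit_iff_odd odd_iff_mod_2_eq_one)
  qed
  then show ?thesis by (simp add: bit_eq_iff)
qed

lemma G_orth: assumes "0 \<le> p k" "p k \<le> 1" "d = 0 \<or> d = 1" "e = 0 \<or> e = 1"
  shows "G p k 0 d * G p k 0 e + G p k 1 d * G p k 1 e = 2 * (if d = e then 1 else 0)"
proof -
  have a: "sqrt (p k) ^ 2 = p k" "sqrt (1 - p k) ^ 2 = 1 - p k" using assms by auto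
  show ?thesis using assms by (auto simp: G_def algebra_simps power2_eq_square a[unfolded power2_eq_square] abs_of_nonneg)
qed

lemma row_orth: assumes "\<forall>k<m. 0 \<le> p k \<and> p k \<le> 1" "j < 2^m" "l < 2^m"
  shows "(\<Sum>i<2^m. (1/2)^m * (gamma_coef m p i j * gamma_coef m p i l)) = (if j = l then 1 else 0)"
proof -
  have "(\<Sum>i<2^m. (1/2)^m * (gamma_coef m p i j * gamma_coef m p i l))
      = (\<Sum>i<2^m. \<Prod>k<m. (1/2) * (G p k (nbit i k) (nbit j k) * G p k (nbit i k) (nbit l k)))"
    unfolding gamma_G by (intro sum.cong refl, subst prod.distrib, subst prod.distrib) simp
  also have "\<dots> = (\<Prod>k<m. (1/2) * (G p k 0 (nbit j k) * G p k 0 (nbit l k)) + (1/2) * (G p k 1 (nbit j k) * G p k 1 (nbit l k)))"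
    by (rule sum_prod_bits)
  also have "\<dots> = (\<Prod>k<m. (if nbit j k = nbit l k then 1 else 0))"
  proof (intro prod.cong refl)
    fix k assume "k \<in> {..<m}"
    then have pk: "0 \<le> p k" "p k \<le> 1" using assms(1) by auto
    have "(1/2) * (G p k 0 (nbit j k) * G p k 0 (nbit l k)) + (1/2) * (G p k 1 (nbit j k) * G p k 1 (nbit l k))
       = (1/2) * (G p k 0 (nbit j k) * G p k 0 (nbit l k) + G p k 1 (nbit j k) * G p k 1 (nbit l k))"
      by (simp only: distrib_left)
    also have "\<dots> = (if nbit j k = nbit l k then 1 else 0)"
      by (simp only: G_orth[of p k "nbit j k" "nbit l k", OF pk nbit_cases nbit_cases])
    finally show "(1/2) * (G p k 0 (nbit j k) * G p k 0 (nbit l k)) + (1/2) * (G p k 1 (nbit j k) * G p k 1 (nbit l k))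
       = (if nbit j k = nbit l k then 1 else (0::real))" .
  qed
  also have "\<dots> = (if j = l then 1 else 0)"
  proof (cases "j = l")
    case False
    then obtain k where "k < m" "nbit j k \<noteq> nbit l k" using nbit_inj[OF assms(2,3)] by blast
    then have "(\<Prod>k<m. if nbit j k = nbit l k then 1 else 0) = (0::real)"
      by (intro prod_zero) (auto intro!: bexI[of _ k])
    then show ?thesis using False by simp
  qed simp
  finally show ?thesis .
qed

lemma inner_sums: "(\<Sum>j\<in>A. a j *\<^sub>R (v j :: 'a::real_inner)) \<bullet> (\<Sum>l\<in>A. a l *\<^sub>R v l)
   = (\<Sum>j\<in>A. \<Sum>l\<in>A. a j * a l * (v j \<bullet> v l))"
  apply (simp only: inner_sum_left inner_scaleR_left inner_sum_right inner_scaleR_right sum_distrib_left mult.assoc)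
  apply (subst sum.swap)
  apply (simp add: inner_commute mult.left_commute)
  done

lemma energy_eq: assumes "\<forall>k<m. 0 \<le> p k \<and> p k \<le> 1"
  shows "energy_sym m p x = energy_sym m uniform_bits (transform m p x)"
proof -
  let ?s = "\<lambda>j. sqrt (symprob m p j)"
  have "energy_sym m uniform_bits (transform m p x)
      = (\<Sum>i<2^m. (1/2)^m * (\<Sum>j<2^m. \<Sum>l<2^m. (gamma_coef m p i j * ?s j) * (gamma_coef m p i l * ?s l) * (x j \<bullet> x l)))"
    unfolding energy_sym_def transform_def symprob_unif power2_norm_eq_inner inner_sums by simp
  also have "\<dots> = (\<Sum>j<2^m. \<Sum>l<2^m. (\<Sum>i<2^m. (1/2)^m * (gamma_coef m p i j * gamma_coef m p i l)) * (?s j * ?s l * (x j \<bullet> x l)))"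
  proof -
    have "(\<Sum>i<2^m. (1/2)^m * (\<Sum>j<2^m. \<Sum>l<2^m. (gamma_coef m p i j * ?s j) * (gamma_coef m p i l * ?s l) * (x j \<bullet> x l)))
       = (\<Sum>i<2^m. \<Sum>j<2^m. \<Sum>l<2^m. (1/2)^m * (gamma_coef m p i j * gamma_coef m p i l) * (?s j * ?s l * (x j \<bullet> x l)))"
      by (simp only: sum_distrib_left) (intro sum.cong refl, simp only: mult_ac)
    also have "\<dots> = (\<Sum>j<2^m. \<Sum>i<2^m. \<Sum>l<2^m. (1/2)^m * (gamma_coef m p i j * gamma_coef m p i l) * (?s j * ?s l * (x j \<bullet> x l)))"
      by (rule sum.swap)
    also have "\<dots> = (\<Sum>j<2^m. \<Sum>l<2^m. \<Sum>i<2^m. (1/2)^m * (gamma_coef m p i j * gamma_coef m p i l) * (?s j * ?s l * (x j \<bullet> x l)))"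
      by (rule sum.cong[OF refl], rule sum.swap)
    finally show ?thesis by (simp only: sum_distrib_right)
  qed
  also have "\<dots> = (\<Sum>j<2^m. \<Sum>l<2^m. (if j = l then ?s j * ?s l * (x j \<bullet> x l) else 0))"
    by (intro sum.cong refl) (simp add: row_orth[OF assms])
  also have "\<dots> = (\<Sum>j<2^m. ?s j * ?s j * (x j \<bullet> x j))"
    by (simp add: sum.delta)
  also have "\<dots> = energy_sym m p x"
    unfolding energy_sym_def using assms
    by (intro sum.cong refl) (simp add: symprob_nonneg power2_norm_eq_inner)
  finally show ?thesis by simp
qed


definition gs :: "real \<Rightarrow> real ^ 'n \<Rightarrow> real ^ 'n \<Rightarrow> real" where
  "gs N0 v y = (\<Prod>n\<in>UNIV. exp (- ((y $ n - v $ n)\<^sup>2) / N0) / sqrt (pi * N0))"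

lemma gauss_ch_gs: "gauss_ch N0 h xv = gs N0 (h * xv)"
  by (simp add: fun_eq_iff gauss_ch_def gs_def times_vec_def)

lemma gs_pos: "N0 > 0 \<Longrightarrow> 0 < gs N0 v y"
  unfolding gs_def by (intro prod_pos) auto

lemma gs_nd: assumes "N0 > 0"
  shows "gs N0 v y = (\<Prod>n\<in>UNIV. normal_density (v $ n) (sqrt (N0 / 2)) (y $ n))"
  unfolding gs_def normal_density_def using assms
  by (intro prod.cong refl) (simp add: power2_eq_square real_sqrt_mult)

lemma Basis_vec_image: "(Basis :: (real^'n::finite) set) = (\<lambda>i. axis i 1) ` UNIV"
  by (auto simp: Basis_vec_def)

lemma inj_axis1: "inj (\<lambda>i::'n::finite. axis i (1::real))"
  by (auto simp: inj_def axis_eq_axis)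

lemma prod_Basis_vec:
  "(\<Prod>b\<in>(Basis :: (real^'n::finite) set). f b) = (\<Prod>i\<in>UNIV. f (axis i 1))"
  unfolding Basis_vec_image by (subst prod.reindex[OF inj_axis1]) simp

lemma gs_measurable[measurable]: "(\<lambda>y. gs N0 v y) \<in> borel_measurable borel"
  unfolding gs_def by measurable

lemma gs_nn_integral: assumes "N0 > 0"
  shows "(\<integral>\<^sup>+y. ennreal (gs N0 v y) \<partial>lborel) = 1"
proof -
  let ?f = "\<lambda>b x. normal_density (v \<bullet> b) (sqrt (N0 / 2)) x"
  have "(\<integral>\<^sup>+y. ennreal (gs N0 v y) \<partial>lborel) = (\<integral>\<^sup>+y. (\<Prod>b\<in>Basis. ennreal (?f b (y \<bullet> b))) \<partial>lborel)"
    by (intro nn_integral_cong) (simp add: gs_nd[OF assms] prod_Basis_vec inner_axis prod_ennreal)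
  also have "\<dots> = (\<Prod>b\<in>Basis. (\<integral>\<^sup>+x. ennreal (?f b x) \<partial>lborel))"
    by (rule nn_integral_lborel_prod) auto
  also have "\<dots> = 1"
    using assms by (intro prod.neutral ballI) (simp add: nn_integral_eq_integral)
  finally show ?thesis .
qed

lemma gs_integrable: assumes "N0 > 0" shows "integrable lborel (gs N0 v)"
proof (rule integrableI_nonneg)
  show "AE x in lborel. 0 \<le> gs N0 v x" by (intro AE_I2 less_imp_le gs_pos[OF assms])
next
  have "(\<integral>\<^sup>+y. ennreal (gs N0 v y) \<partial>lborel) = 1" by (rule gs_nn_integral[OF assms])
  then show "(\<integral>\<^sup>+y. ennreal (gs N0 v y) \<partial>lborel) < \<infinity>" by simp
qed measurable

lemma gs_integral: assumes "N0 > 0" shows "integral\<^sup>L lborel (gs N0 v) = 1"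
proof -
  have "AE x in lborel. 0 \<le> gs N0 v x" by (intro AE_I2 less_imp_le gs_pos[OF assms])
  then show ?thesis using gs_nn_integral[OF assms] by (subst integral_eq_nn_integral) auto
qed

lemma inner_vec_real: "(x::real^'n::finite) \<bullet> y = (\<Sum>n\<in>UNIV. x $ n * y $ n)"
  by (simp add: inner_vec_def)

lemma gs_ratio: assumes "N0 > 0"
  shows "gs N0 (v + b) y = gs N0 v y * exp ((2 / N0) * ((y - v) \<bullet> b - (norm b)\<^sup>2 / 2))"
proof -
  have nb: "(norm b)\<^sup>2 = (\<Sum>n\<in>UNIV. b $ n * b $ n)"
    by (simp add: power2_norm_eq_inner inner_vec_real)
  have "(2 / N0) * ((y - v) \<bullet> b - (norm b)\<^sup>2 / 2) = (\<Sum>n\<in>UNIV. (2 / N0) * ((y $ n - v $ n) * b $ n - b $ n * b $ n / 2))"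
    by (simp add: nb inner_vec_real sum_distrib_left sum_subtractf sum_divide_distrib[symmetric] diff_divide_distrib flip: sum_distrib_left)
  then have "exp ((2 / N0) * ((y - v) \<bullet> b - (norm b)\<^sup>2 / 2)) = (\<Prod>n\<in>UNIV. exp ((2 / N0) * ((y $ n - v $ n) * b $ n - b $ n * b $ n / 2)))"
    by (simp add: exp_sum)
  then have "gs N0 v y * exp ((2 / N0) * ((y - v) \<bullet> b - (norm b)\<^sup>2 / 2))
     = (\<Prod>n\<in>UNIV. exp (- ((y $ n - v $ n)\<^sup>2) / N0) / sqrt (pi * N0) * exp ((2 / N0) * ((y $ n - v $ n) * b $ n - b $ n * b $ n / 2)))"
    by (simp add: gs_def flip: prod.distrib)
  also have "\<dots> = gs N0 (v + b) y"
    unfolding gs_def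
  proof (intro prod.cong refl)
    fix n
    have "- ((y $ n - (v + b) $ n)\<^sup>2) / N0 = - ((y $ n - v $ n)\<^sup>2) / N0 + (2 / N0) * ((y $ n - v $ n) * b $ n - b $ n * b $ n / 2)"
      using assms by (simp add: field_simps power2_eq_square)
    then show "exp (- ((y $ n - v $ n)\<^sup>2) / N0) / sqrt (pi * N0) * exp ((2 / N0) * ((y $ n - v $ n) * b $ n - b $ n * b $ n / 2))
      = exp (- ((y $ n - (v + b) $ n)\<^sup>2) / N0) / sqrt (pi * N0)"
      by (simp add: exp_add[symmetric])
  qed
  finally show ?thesis ..
qed

lemma gs_refl: "gs N0 v (2 *\<^sub>R v - y) = gs N0 v y"
  unfolding gs_def by (intro prod.cong refl) (simp add: power2_eq_square algebra_simps)

lemma lborel_refl: "distr lborel borel (\<lambda>y. c - y) = (lborel :: (real^'n::finite) measure)"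
proof -
  have "lborel = density (distr lborel borel (\<lambda>x. c + (-1) *\<^sub>R x)) (\<lambda>_. \<bar>-1::real\<bar> ^ DIM(real^'n))"
    by (rule lborel_affine) simp
  then show ?thesis by (simp add: density_1)
qed

lemma integral_refl: fixes F :: "real^'n::finite \<Rightarrow> real"
  assumes [measurable]: "F \<in> borel_measurable borel"
  shows "integral\<^sup>L lborel (\<lambda>y. F (c - y)) = integral\<^sup>L lborel F"
proof -
  have "integral\<^sup>L lborel F = integral\<^sup>L (distr lborel borel (\<lambda>y. c - y)) F"
    by (simp add: lborel_refl)
  also have "\<dots> = integral\<^sup>L lborel (\<lambda>y. F (c - y))"
    by (rule integral_distr) auto
  finally show ?thesis ..
qed

lemma gs_mgf_pt: assumes "N0 > 0"
  shows "gs N0 v y * exp ((2/N0) * ((y - v) \<bullet> b)) = exp ((2/N0) * (norm b)\<^sup>2 / 2) * gs N0 (v + b) y"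
proof -
  have "exp ((2/N0) * (norm b)\<^sup>2 / 2) * exp ((2 / N0) * ((y - v) \<bullet> b - (norm b)\<^sup>2 / 2)) = exp ((2/N0) * ((y - v) \<bullet> b))"
    by (simp add: exp_add[symmetric] algebra_simps)
  then show ?thesis by (simp add: gs_ratio[OF assms, of v b y] mult_ac)
qed

lemma gs_mgf_integrable: assumes "N0 > 0"
  shows "integrable lborel (\<lambda>y. gs N0 v y * exp ((2/N0) * ((y - v) \<bullet> b)))"
  unfolding gs_mgf_pt[OF assms] by (intro integrable_mult_right gs_integrable assms)

lemma gs_mgf: assumes "N0 > 0"
  shows "(\<integral>y. gs N0 v y * exp ((2/N0) * ((y - v) \<bullet> b)) \<partial>lborel) = exp ((2/N0) * (norm b)\<^sup>2 / 2)"
  unfolding gs_mgf_pt[OF assms] using gs_integral[OF assms] by simp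

lemma gs_lin_integrable: assumes "N0 > 0"
  shows "integrable lborel (\<lambda>y. gs N0 v y * ((y - v) \<bullet> b))"
proof (rule Bochner_Integration.integrable_bound)
  let ?b = "(N0/2) *\<^sub>R b"
  have e: "(2/N0) * ((y - v) \<bullet> (c *\<^sub>R ?b)) = c * ((y - v) \<bullet> b)" for y c using assms by simp
  show "integrable lborel (\<lambda>y. gs N0 v y * exp ((2/N0) * ((y - v) \<bullet> ?b)) + gs N0 v y * exp ((2/N0) * ((y - v) \<bullet> ((-1) *\<^sub>R ?b))))"
    by (intro Bochner_Integration.integrable_add gs_mgf_integrable assms)
  show "AE y in lborel. norm (gs N0 v y * ((y - v) \<bullet> b)) \<le> norm (gs N0 v y * exp ((2/N0) * ((y - v) \<bullet> ?b)) + gs N0 v y * exp ((2/N0) * ((y - v) \<bullet> ((-1) *\<^sub>R ?b))))"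
  proof (intro AE_I2)
    fix y
    have t: "\<bar>t\<bar> \<le> exp t + exp (-t)" for t :: real
      using exp_ge_add_one_self[of t] exp_ge_add_one_self[of "-t"] exp_gt_zero[of t] exp_gt_zero[of "-t"]
      by linarith
    have "norm (gs N0 v y * ((y - v) \<bullet> b)) = gs N0 v y * \<bar>(y - v) \<bullet> b\<bar>"
      using gs_pos[OF assms, of v y] by (simp add: abs_mult)
    also have "\<dots> \<le> gs N0 v y * (exp ((y - v) \<bullet> b) + exp (- ((y - v) \<bullet> b)))"
      using gs_pos[OF assms, of v y] t by (intro mult_left_mono) auto
    also have "\<dots> = gs N0 v y * exp ((2/N0) * ((y - v) \<bullet> ?b)) + gs N0 v y * exp ((2/N0) * ((y - v) \<bullet> ((-1) *\<^sub>R ?b)))"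
      using e[of y 1] e[of y "-1"] by (simp add: distrib_left)
    also have "\<dots> \<le> norm \<dots>" by simp
    finally show "norm (gs N0 v y * ((y - v) \<bullet> b)) \<le> norm (gs N0 v y * exp ((2/N0) * ((y - v) \<bullet> ?b)) + gs N0 v y * exp ((2/N0) * ((y - v) \<bullet> ((-1) *\<^sub>R ?b))))" .
  qed
qed measurable

lemma gs_lin0: assumes "N0 > 0"
  shows "(\<integral>y. gs N0 v y * ((y - v) \<bullet> b) \<partial>lborel) = 0"
proof -
  let ?F = "\<lambda>y. gs N0 v y * ((y - v) \<bullet> b)"
  have "integral\<^sup>L lborel (\<lambda>y. ?F (2 *\<^sub>R v - y)) = integral\<^sup>L lborel ?F"
    by (rule integral_refl) measurable
  moreover have "?F (2 *\<^sub>R v - y) = - ?F y" for y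
  proof -
    have a: "(2 *\<^sub>R v - y - v) = - (y - v)" by (simp add: algebra_simps scaleR_2)
    have b: "gs N0 v (2 *\<^sub>R v - y) = gs N0 v y" by (rule gs_refl)
    show ?thesis by (simp only: a b inner_minus_left mult_minus_right)
  qed
  ultimately have "- integral\<^sup>L lborel ?F = integral\<^sup>L lborel ?F" by simp
  then show ?thesis by simp
qed

lemma gs_lin_integrable': assumes "N0 > 0"
  shows "integrable lborel (\<lambda>y. gs N0 v y * ((y - w) \<bullet> b))"
proof -
  have "(\<lambda>y. gs N0 v y * ((y - w) \<bullet> b)) = (\<lambda>y. gs N0 v y * ((y - v) \<bullet> b) + gs N0 v y * ((v - w) \<bullet> b))"
    by (rule ext) (simp add: inner_diff_left algebra_simps)
  then show ?thesis
    by (simp add: Bochner_Integration.integrable_add gs_lin_integrable[OF assms] gs_integrable[OF assms])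
qed

lemma gs_lin: assumes "N0 > 0"
  shows "(\<integral>y. gs N0 v y * ((y - w) \<bullet> b) \<partial>lborel) = (v - w) \<bullet> b"
proof -
  have "(\<lambda>y. gs N0 v y * ((y - w) \<bullet> b)) = (\<lambda>y. gs N0 v y * ((y - v) \<bullet> b) + (v - w) \<bullet> b * gs N0 v y)"
    by (rule ext) (simp add: inner_diff_left algebra_simps)
  then show ?thesis
    using gs_lin_integrable[OF assms, of v b] gs_integrable[OF assms, of v] gs_lin0[OF assms, of v b] gs_integral[OF assms, of v]
    by (simp only:) (subst Bochner_Integration.integral_add, auto)
qed

lemma gs_log_ratio: assumes "N0 > 0"
  shows "ln (gs N0 v y / gs N0 c y) = (2/N0) * ((y - c) \<bullet> (v - c) - (norm (v - c))\<^sup>2 / 2)"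
proof -
  have "gs N0 v y = gs N0 (c + (v - c)) y" by simp
  also have "\<dots> = gs N0 c y * exp ((2 / N0) * ((y - c) \<bullet> (v - c) - (norm (v - c))\<^sup>2 / 2))"
    by (rule gs_ratio[OF assms])
  finally show ?thesis using gs_pos[OF assms, of c y] by simp
qed

lemma gs_chi_pt: assumes "N0 > 0"
  shows "gs N0 a y * gs N0 b y / gs N0 c y = exp ((2/N0) * ((a - c) \<bullet> (b - c))) * gs N0 (a + b - c) y"
proof -
  let ?t = "2/N0"
  have E: "gs N0 (c + d) y = gs N0 c y * exp (?t * ((y - c) \<bullet> d - (norm d)\<^sup>2 / 2))" for d
    by (rule gs_ratio[OF assms])
  have n0: "(norm (p + r))\<^sup>2 = (norm p)\<^sup>2 + (norm r)\<^sup>2 + 2 * (p \<bullet> r)" for p r :: "real^'a"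
    by (simp add: power2_norm_eq_inner inner_add_left inner_add_right inner_commute)
  have n: "(norm ((a - c) + (b - c)))\<^sup>2 = (norm (a - c))\<^sup>2 + (norm (b - c))\<^sup>2 + 2 * ((a - c) \<bullet> (b - c))"
    by (rule n0)
  have "gs N0 a y * gs N0 b y / gs N0 c y
      = gs N0 (c + (a - c)) y * gs N0 (c + (b - c)) y / gs N0 c y" by simp
  also have "\<dots> = gs N0 c y * (exp (?t * ((y - c) \<bullet> (a - c) - (norm (a - c))\<^sup>2 / 2)) * exp (?t * ((y - c) \<bullet> (b - c) - (norm (b - c))\<^sup>2 / 2)))"
    unfolding E using gs_pos[OF assms, of c y] by (simp add: field_simps)
  also have "exp (?t * ((y - c) \<bullet> (a - c) - (norm (a - c))\<^sup>2 / 2)) * exp (?t * ((y - c) \<bullet> (b - c) - (norm (b - c))\<^sup>2 / 2))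
     = exp (?t * ((a - c) \<bullet> (b - c))) * exp (?t * ((y - c) \<bullet> ((a - c) + (b - c)) - (norm ((a - c) + (b - c)))\<^sup>2 / 2))"
  proof -
    have r: "exp (t * (A - na / 2)) * exp (t * (B - nb / 2)) = exp (t * X) * exp (t * ((A + B) - (na + nb + 2 * X) / 2))"
      for t A B X na nb :: real
      by (simp add: exp_add[symmetric] algebra_simps)
    show ?thesis unfolding n inner_add_right by (rule r)
  qed
  also have "gs N0 c y * (exp (?t * ((a - c) \<bullet> (b - c))) * exp (?t * ((y - c) \<bullet> ((a - c) + (b - c)) - (norm ((a - c) + (b - c)))\<^sup>2 / 2)))
     = exp (?t * ((a - c) \<bullet> (b - c))) * gs N0 (c + ((a - c) + (b - c))) y"
    unfolding E by simp
  also have "c + ((a - c) + (b - c)) = a + b - c" by (simp add: algebra_simps)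
  finally show ?thesis .
qed


definition mix :: "real \<Rightarrow> 'i set \<Rightarrow> ('i \<Rightarrow> real) \<Rightarrow> ('i \<Rightarrow> real^'n) \<Rightarrow> real^'n \<Rightarrow> real" where
  "mix N0 I q v y = (\<Sum>i\<in>I. q i * gs N0 (v i) y)"

definition mbar :: "'i set \<Rightarrow> ('i \<Rightarrow> real) \<Rightarrow> ('i \<Rightarrow> real^'n) \<Rightarrow> real^'n" where
  "mbar I q v = (\<Sum>i\<in>I. q i *\<^sub>R v i)"

lemma wsum_aff: assumes "sum q I = 1"
  shows "(\<Sum>i\<in>I. q i * (t * (X i - K))) = t * ((\<Sum>i\<in>I. q i * X i) - (K::real))"
proof -
  have "(\<Sum>i\<in>I. q i * (t * (X i - K))) = t * (\<Sum>i\<in>I. q i * X i) - t * K * (\<Sum>i\<in>I. q i)"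
    by (simp add: algebra_simps sum_subtractf sum_distrib_left sum_distrib_right)
  then show ?thesis using assms by (simp add: algebra_simps)
qed

lemma wsum_inner: assumes "sum q I = 1"
  shows "(\<Sum>i\<in>I. q i * ((v i - w) \<bullet> d)) = (mbar I q v - w) \<bullet> (d :: real^'n::finite)"
  unfolding mbar_def using assms
  by (simp add: inner_diff_left inner_sum_left right_diff_distrib sum_subtractf sum_distrib_right[symmetric])

lemma xlog_lower: "0 < a \<Longrightarrow> 0 < b \<Longrightarrow> a - b \<le> a * ln (a / (b::real))"
proof -
  assume a: "0 < a" and b: "0 < b"
  have "ln (b / a) \<le> b / a - 1" using ln_le_minus_one[of "b/a"] a b by simp
  moreover have "ln (b / a) = - ln (a / b)" using a b by (simp add: ln_div)
  ultimately have "a * (1 - b / a) \<le> a * ln (a / b)" using a by (intro mult_left_mono) auto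
  then show ?thesis using a by (simp add: algebra_simps)
qed

lemma gs_linfun_integrable: assumes "N0 > 0"
  shows "integrable lborel (\<lambda>y. gs N0 v y * ((2/N0) * ((y - w) \<bullet> b - K)))"
proof -
  have "(\<lambda>y. gs N0 v y * ((2/N0) * ((y - w) \<bullet> b - K))) = (\<lambda>y. (2/N0) * (gs N0 v y * ((y - w) \<bullet> b)) - ((2/N0) * K) * gs N0 v y)"
    by (simp add: fun_eq_iff right_diff_distrib mult_ac)
  then show ?thesis
    by (simp add: Bochner_Integration.integrable_diff integrable_mult_right gs_lin_integrable'[OF assms] gs_integrable[OF assms])
qed

lemma gs_linfun_integral: assumes "N0 > 0"
  shows "(\<integral>y. gs N0 v y * ((2/N0) * ((y - w) \<bullet> b - K)) \<partial>lborel) = (2/N0) * ((v - w) \<bullet> b - K)"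
proof -
  have "(\<lambda>y. gs N0 v y * ((2/N0) * ((y - w) \<bullet> b - K))) = (\<lambda>y. (2/N0) * (gs N0 v y * ((y - w) \<bullet> b)) - ((2/N0) * K) * gs N0 v y)"
    by (simp add: fun_eq_iff right_diff_distrib mult_ac)
  then have "(\<integral>y. gs N0 v y * ((2/N0) * ((y - w) \<bullet> b - K)) \<partial>lborel)
     = (\<integral>y. (2/N0) * (gs N0 v y * ((y - w) \<bullet> b)) - ((2/N0) * K) * gs N0 v y \<partial>lborel)" by simp
  also have "\<dots> = (\<integral>y. (2/N0) * (gs N0 v y * ((y - w) \<bullet> b)) \<partial>lborel) - (\<integral>y. ((2/N0) * K) * gs N0 v y \<partial>lborel)"
    by (rule Bochner_Integration.integral_diff)
       (simp_all add: integrable_mult_right gs_lin_integrable'[OF assms] gs_integrable[OF assms])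
  also have "\<dots> = (2/N0) * ((v - w) \<bullet> b) - ((2/N0) * K)"
    by (simp add: gs_lin[OF assms] gs_integral[OF assms])
  finally show ?thesis by (simp add: right_diff_distrib)
qed

lemma gs_self_kl_integrable: assumes "N0 > 0"
  shows "integrable lborel (\<lambda>y. gs N0 v y * ln (gs N0 v y / gs N0 c y))"
  unfolding gs_log_ratio[OF assms] by (rule gs_linfun_integrable[OF assms])

lemma gs_self_kl: assumes "N0 > 0"
  shows "(\<integral>y. gs N0 v y * ln (gs N0 v y / gs N0 c y) \<partial>lborel) = (2/N0) * (norm (v - c))\<^sup>2 / 2"
  unfolding gs_log_ratio[OF assms] gs_linfun_integral[OF assms]
  by (simp only: power2_norm_eq_inner) (simp add: field_simps)

locale mixture =
  fixes N0 :: real and I :: "'i set" and q :: "'i \<Rightarrow> real" and v :: "'i \<Rightarrow> real^'n::finite"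
  assumes N0: "N0 > 0" and fin: "finite I" and qpos: "\<And>i. i \<in> I \<Longrightarrow> q i > 0" and qsum: "sum q I = 1"
begin

abbreviation "m \<equiv> mix N0 I q v"

lemma I_ne: "I \<noteq> {}" using qsum by auto

lemma m_pos: "0 < m y"
  unfolding mix_def using fin I_ne qpos gs_pos[OF N0] by (intro sum_pos) (auto intro!: mult_pos_pos)

lemma m_meas[measurable]: "m \<in> borel_measurable borel"
  unfolding mix_def by measurable

lemma m_integrable: "integrable lborel m"
  unfolding mix_def by (intro Bochner_Integration.integrable_sum integrable_mult_right gs_integrable N0)

lemma m_integral: "integral\<^sup>L lborel m = 1"
  unfolding mix_def
  by (subst Bochner_Integration.integral_sum) (auto simp: qsum gs_integral[OF N0] gs_integrable[OF N0])

lemma m_lin_integrable: "integrable lborel (\<lambda>y. m y * ((y - w) \<bullet> b))"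
  unfolding mix_def sum_distrib_right
  by (intro Bochner_Integration.integrable_sum) (simp add: mult.assoc integrable_mult_right gs_lin_integrable'[OF N0])

lemma m_lin: "(\<integral>y. m y * ((y - w) \<bullet> b) \<partial>lborel) = (mbar I q v - w) \<bullet> b"
proof -
  have "(\<integral>y. m y * ((y - w) \<bullet> b) \<partial>lborel) = (\<Sum>i\<in>I. q i * ((v i - w) \<bullet> b))"
    unfolding mix_def sum_distrib_right
    by (subst Bochner_Integration.integral_sum) (auto simp: mult.assoc integrable_mult_right gs_lin_integrable'[OF N0] gs_lin[OF N0])
  also have "\<dots> = (mbar I q v - w) \<bullet> b"
    unfolding mbar_def using qsum
    by (simp add: inner_diff_left inner_sum_left right_diff_distrib sum_subtractf sum_distrib_right[symmetric])
  finally show ?thesis .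
qed

definition "chi c = (\<Sum>i\<in>I. \<Sum>j\<in>I. q i * q j * exp ((2/N0) * ((v i - c) \<bullet> (v j - c))))"

lemma m2_pt: "m y * m y / gs N0 c y = (\<Sum>i\<in>I. \<Sum>j\<in>I. q i * q j * (exp ((2/N0) * ((v i - c) \<bullet> (v j - c))) * gs N0 (v i + v j - c) y))"
proof -
  have "m y * m y / gs N0 c y = (\<Sum>i\<in>I. \<Sum>j\<in>I. q i * q j * (gs N0 (v i) y * gs N0 (v j) y / gs N0 c y))"
    unfolding mix_def sum_product sum_divide_distrib by (intro sum.cong refl) (simp add: mult_ac)
  also have "\<dots> = (\<Sum>i\<in>I. \<Sum>j\<in>I. q i * q j * (exp ((2/N0) * ((v i - c) \<bullet> (v j - c))) * gs N0 (v i + v j - c) y))"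
    by (simp add: gs_chi_pt[OF N0])
  finally show ?thesis .
qed

lemma m2_integrable: "integrable lborel (\<lambda>y. m y * m y / gs N0 c y)"
  unfolding m2_pt
  by (intro Bochner_Integration.integrable_sum integrable_mult_right gs_integrable N0)

lemma m2_integral: "(\<integral>y. m y * m y / gs N0 c y \<partial>lborel) = chi c"
  unfolding m2_pt chi_def
  by (simp add: Bochner_Integration.integral_sum integrable_mult_right gs_integrable[OF N0] gs_integral[OF N0]
      Bochner_Integration.integrable_sum)

definition "klf c y = m y * ln (m y / gs N0 c y)"

lemma klf_meas[measurable]: "klf c \<in> borel_measurable borel"
  unfolding klf_def by measurable

lemma klf_lower: "m y - gs N0 c y \<le> klf c y"
proof -
  have g: "0 < gs N0 c y" by (rule gs_pos[OF N0])
  have "ln (gs N0 c y / m y) \<le> gs N0 c y / m y - 1"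
    using g m_pos by (intro ln_le_minus_one) auto
  moreover have "ln (gs N0 c y / m y) = - ln (m y / gs N0 c y)"
    using g m_pos[of y] by (simp add: ln_div)
  ultimately have "- ln (m y / gs N0 c y) \<le> gs N0 c y / m y - 1" by simp
  then have "m y * (1 - gs N0 c y / m y) \<le> m y * ln (m y / gs N0 c y)"
    using m_pos[of y] by (intro mult_left_mono) auto
  then show ?thesis using m_pos[of y] by (simp add: klf_def algebra_simps)
qed

lemma klf_upper: "klf c y \<le> m y * m y / gs N0 c y - m y"
proof -
  have g: "0 < gs N0 c y" by (rule gs_pos[OF N0])
  have "ln (m y / gs N0 c y) \<le> m y / gs N0 c y - 1"
    using g m_pos by (intro ln_le_minus_one) auto
  then have "m y * ln (m y / gs N0 c y) \<le> m y * (m y / gs N0 c y - 1)"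
    using m_pos[of y] by (intro mult_left_mono) auto
  then show ?thesis by (simp add: klf_def algebra_simps)
qed

lemma klf_integrable: "integrable lborel (klf c)"
proof (rule Bochner_Integration.integrable_bound)
  show "integrable lborel (\<lambda>y. m y * m y / gs N0 c y + m y + gs N0 c y)"
    by (intro Bochner_Integration.integrable_add m2_integrable m_integrable gs_integrable N0)
  show "AE y in lborel. norm (klf c y) \<le> norm (m y * m y / gs N0 c y + m y + gs N0 c y)"
  proof (intro AE_I2)
    fix y
    have "0 \<le> m y * m y / gs N0 c y" using m_pos[of y] gs_pos[OF N0, of c y] by simp
    moreover note klf_lower[of y c] klf_upper[of c y] m_pos[of y] gs_pos[OF N0, of c y]
    ultimately have "\<bar>klf c y\<bar> \<le> m y * m y / gs N0 c y + m y + gs N0 c y" "0 \<le> m y * m y / gs N0 c y + m y + gs N0 c y"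
      unfolding abs_le_iff by linarith+
    then show "norm (klf c y) \<le> norm (m y * m y / gs N0 c y + m y + gs N0 c y)"
      by simp
  qed
qed measurable

definition "kl c = integral\<^sup>L lborel (klf c)"

lemma kl_nonneg: "0 \<le> kl c"
proof -
  have "integral\<^sup>L lborel (\<lambda>y. m y - gs N0 c y) \<le> kl c"
    unfolding kl_def
    by (intro integral_mono klf_lower klf_integrable Bochner_Integration.integrable_diff m_integrable gs_integrable N0)
  moreover have "integral\<^sup>L lborel (\<lambda>y. m y - gs N0 c y) = 0"
    using m_integrable gs_integrable[OF N0, of c] m_integral gs_integral[OF N0, of c] by simp
  ultimately show ?thesis by simp
qed

lemma kl_chi: "kl c \<le> chi c - 1"
proof -
  have "kl c \<le> integral\<^sup>L lborel (\<lambda>y. m y * m y / gs N0 c y - m y)"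
    unfolding kl_def
    by (intro integral_mono klf_upper klf_integrable Bochner_Integration.integrable_diff m_integrable m2_integrable)
  then show ?thesis
    using m_integrable m2_integrable m2_integral m_integral by simp
qed

lemma klf_logsum: "klf c y \<le> (\<Sum>i\<in>I. q i * (gs N0 (v i) y * ln (gs N0 (v i) y / gs N0 c y)))"
proof -
  have g: "0 < gs N0 c y" by (rule gs_pos[OF N0])
  have mp: "0 < m y" by (rule m_pos)
  have split: "q i * (gs N0 (v i) y * ln (gs N0 (v i) y / gs N0 c y))
      = q i * (gs N0 (v i) y * ln (gs N0 (v i) y / m y)) + q i * gs N0 (v i) y * ln (m y / gs N0 c y)" for i
  proof -
    have "ln (gs N0 (v i) y / gs N0 c y) = ln (gs N0 (v i) y / m y) + ln (m y / gs N0 c y)"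
      using g mp gs_pos[OF N0, of "v i" y] by (simp add: ln_div)
    then show ?thesis by (simp add: algebra_simps)
  qed
  have "(\<Sum>i\<in>I. q i * (gs N0 (v i) y * ln (gs N0 (v i) y / gs N0 c y)))
      = (\<Sum>i\<in>I. q i * (gs N0 (v i) y * ln (gs N0 (v i) y / m y))) + klf c y"
    unfolding split sum.distrib klf_def mix_def sum_distrib_right by simp
  moreover have "0 \<le> (\<Sum>i\<in>I. q i * (gs N0 (v i) y * ln (gs N0 (v i) y / m y)))"
  proof -
    have "(\<Sum>i\<in>I. q i * (gs N0 (v i) y - m y)) \<le> (\<Sum>i\<in>I. q i * (gs N0 (v i) y * ln (gs N0 (v i) y / m y)))"
      using qpos mp gs_pos[OF N0] by (intro sum_mono mult_left_mono xlog_lower) (auto intro: less_imp_le)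
    moreover have "(\<Sum>i\<in>I. q i * (gs N0 (v i) y - m y)) = 0"
      using qsum by (simp add: right_diff_distrib sum_subtractf mix_def flip: sum_distrib_right)
    ultimately show ?thesis by simp
  qed
  ultimately show ?thesis by simp
qed

lemma kl_logsum: "kl c \<le> (\<Sum>i\<in>I. q i * ((2/N0) * (norm (v i - c))\<^sup>2 / 2))"
proof -
  have "kl c \<le> integral\<^sup>L lborel (\<lambda>y. \<Sum>i\<in>I. q i * (gs N0 (v i) y * ln (gs N0 (v i) y / gs N0 c y)))"
    unfolding kl_def
    by (intro integral_mono klf_logsum klf_integrable Bochner_Integration.integrable_sum integrable_mult_right
        gs_self_kl_integrable N0)
  also have "\<dots> = (\<Sum>i\<in>I. q i * ((2/N0) * (norm (v i - c))\<^sup>2 / 2))"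
    by (simp add: Bochner_Integration.integral_sum integrable_mult_right gs_self_kl_integrable[OF N0] gs_self_kl[OF N0])
  finally show ?thesis .
qed

lemma cross_integrable: "integrable lborel (\<lambda>y. m y * ln (gs N0 c y / gs N0 w y))"
  unfolding gs_log_ratio[OF N0] mix_def sum_distrib_right mult.assoc
  by (intro Bochner_Integration.integrable_sum integrable_mult_right gs_linfun_integrable[OF N0])

lemma cross_integral: "(\<integral>y. m y * ln (gs N0 c y / gs N0 w y) \<partial>lborel)
   = (2/N0) * ((mbar I q v - w) \<bullet> (c - w) - (norm (c - w))\<^sup>2 / 2)"
proof -
  have "(\<integral>y. m y * ln (gs N0 c y / gs N0 w y) \<partial>lborel)
      = (\<Sum>i\<in>I. q i * ((2/N0) * ((v i - w) \<bullet> (c - w) - (norm (c - w))\<^sup>2 / 2)))"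
    unfolding gs_log_ratio[OF N0] mix_def sum_distrib_right mult.assoc
    apply (subst Bochner_Integration.integral_sum)
     apply (intro integrable_mult_right gs_linfun_integrable[OF N0])
    apply (intro sum.cong refl)
    apply (subst integral_mult_right_zero)
    apply (simp only: gs_linfun_integral[OF N0])
    done
  also have "\<dots> = (2/N0) * ((mbar I q v - w) \<bullet> (c - w) - (norm (c - w))\<^sup>2 / 2)"
    by (simp only: wsum_aff[OF qsum] wsum_inner[OF qsum])
  finally show ?thesis .
qed

end


definition chiF :: "'i set \<Rightarrow> ('i \<Rightarrow> real) \<Rightarrow> ('i \<Rightarrow> real^'n::finite) \<Rightarrow> real \<Rightarrow> real" where
  "chiF I q a t = (\<Sum>i\<in>I. \<Sum>j\<in>I. q i * q j * exp (t * (a i \<bullet> a j)))"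

lemma chiF_deriv: "(chiF I q a has_real_derivative (\<Sum>i\<in>I. \<Sum>j\<in>I. q i * q j * (a i \<bullet> a j))) (at 0)"
  unfolding chiF_def
  by (auto intro!: derivative_eq_intros simp: mult_ac)

lemma chiF_lim:
  assumes fin: "finite I" and qs: "sum q I = 1" and a0: "(\<Sum>i\<in>I. q i *\<^sub>R a i) = 0"
  shows "((\<lambda>N. N * (chiF I q a (2/N) - 1)) \<longlongrightarrow> 0) at_top"
proof -
  have D0: "(\<Sum>i\<in>I. \<Sum>j\<in>I. q i * q j * (a i \<bullet> a j)) = 0"
  proof -
    have "(\<Sum>j\<in>I. q i * q j * (a i \<bullet> a j)) = q i * (a i \<bullet> (\<Sum>j\<in>I. q j *\<^sub>R a j))" for i
      by (simp add: inner_sum_right sum_distrib_left mult.assoc)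
    then show ?thesis using a0 by simp
  qed
  have c0: "chiF I q a 0 = 1"
    unfolding chiF_def using qs by (simp flip: sum_distrib_left sum_distrib_right)
  have "((\<lambda>t. (chiF I q a t - chiF I q a 0) / (t - 0)) \<longlongrightarrow> 0) (at 0)"
    using chiF_deriv[of I q a] unfolding D0 has_field_derivative_iff by simp
  then have L: "((\<lambda>t. (chiF I q a t - 1) / t) \<longlongrightarrow> 0) (at 0)" by (simp add: c0)
  have F: "filterlim (\<lambda>N::real. 2 / N) (at 0) at_top"
    unfolding filterlim_at
  proof
    show "\<forall>\<^sub>F N in at_top. 2 / N \<in> UNIV \<and> 2 / N \<noteq> (0::real)"
      using eventually_gt_at_top[of "0::real"] by eventually_elim simp
    show "((\<lambda>N::real. 2 / N) \<longlongrightarrow> 0) at_top"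
      by (rule tendsto_divide_0[OF tendsto_const filterlim_at_top_imp_at_infinity[OF filterlim_ident]])
  qed
  have "((\<lambda>N. (chiF I q a (2/N) - 1) / (2/N)) \<longlongrightarrow> 0) at_top"
    using filterlim_compose[OF L F] by (simp add: comp_def)
  then have "((\<lambda>N. 2 * ((chiF I q a (2/N) - 1) / (2/N))) \<longlongrightarrow> 0) at_top"
    using tendsto_mult_right_zero by blast
  moreover have "eventually (\<lambda>N. 2 * ((chiF I q a (2/N) - 1) / (2/N)) = N * (chiF I q a (2/N) - 1)) at_top"
    using eventually_gt_at_top[of "0::real"] by eventually_elim simp
  ultimately show ?thesis by (rule Lim_transform_eventually)
qed


lemma (in mixture) chi_chiF: "chi c = chiF I q (\<lambda>i. v i - c) (2/N0)"
  by (simp add: chi_def chiF_def)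

lemma kl_lim:
  assumes fin: "finite I" and qpos: "\<And>i. i \<in> I \<Longrightarrow> q i > 0" and qsum: "sum q I = 1"
  shows "((\<lambda>N0. N0 * mixture.kl N0 I q v (mbar I q v)) \<longlongrightarrow> 0) at_top"
proof (rule tendsto_sandwich)
  let ?a = "\<lambda>i. v i - mbar I q v"
  have a0: "(\<Sum>i\<in>I. q i *\<^sub>R ?a i) = 0"
    using qsum by (simp add: scaleR_diff_right sum_subtractf mbar_def flip: scaleR_sum_left)
  have lim: "((\<lambda>N. N * (chiF I q ?a (2/N) - 1)) \<longlongrightarrow> 0) at_top"
    by (rule chiF_lim[OF fin qsum a0])
  show "\<forall>\<^sub>F N0 in at_top. 0 \<le> N0 * mixture.kl N0 I q v (mbar I q v)"
    using eventually_gt_at_top[of "0::real"]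
  proof eventually_elim
    case (elim N0)
    interpret mixture N0 I q v using elim fin qpos qsum by unfold_locales auto
    show ?case using elim kl_nonneg by simp
  qed
  show "\<forall>\<^sub>F N0 in at_top. N0 * mixture.kl N0 I q v (mbar I q v) \<le> N0 * (chiF I q ?a (2/N0) - 1)"
    using eventually_gt_at_top[of "0::real"]
  proof eventually_elim
    case (elim N0)
    interpret mixture N0 I q v using elim fin qpos qsum by unfold_locales auto
    show ?case using elim kl_chi[of "mbar I q v"] chi_chiF by (intro mult_left_mono) auto
  qed
  show "((\<lambda>N. N * (chiF I q ?a (2/N) - 1)) \<longlongrightarrow> 0) at_top" by (rule lim)
qed simp

locale bitsetup =
  fixes I :: "'i set" and P :: "'i \<Rightarrow> real" and lab :: "'i \<Rightarrow> nat" and v :: "'i \<Rightarrow> real^'n::finite"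
  assumes fin: "finite I" and Ppos: "\<And>i. i \<in> I \<Longrightarrow> P i > 0" and Psum: "sum P I = 1"
    and lab01: "\<And>i. i \<in> I \<Longrightarrow> lab i = 0 \<or> lab i = 1"
    and Pupos: "\<And>u. sum P {i\<in>I. lab i = u} > 0 \<or> u \<notin> {0,1}"
begin

definition "A u = {i\<in>I. lab i = u}"
definition "Pu u = sum P (A u)"
definition "qu u i = P i / Pu u"

lemma Pu_pos: "u \<in> {0,1} \<Longrightarrow> Pu u > 0"
  using Pupos[of u] by (auto simp: Pu_def A_def)

lemma A_fin: "finite (A u)" using fin by (simp add: A_def)

lemma qu_sum: "u \<in> {0,1} \<Longrightarrow> sum (qu u) (A u) = 1"
  using Pu_pos[of u] by (simp add: qu_def Pu_def flip: sum_divide_distrib)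

lemma mix_u: "N0 > 0 \<Longrightarrow> u \<in> {0,1} \<Longrightarrow> mixture N0 (A u) (qu u)"
  using A_fin[of u] qu_sum[of u] Pu_pos[of u] by unfold_locales (auto simp: qu_def A_def Ppos)

lemma mix_all: "N0 > 0 \<Longrightarrow> mixture N0 I P"
  by unfold_locales (auto simp: fin Ppos Psum)

definition "fu N0 u = mix N0 (A u) (qu u) v"
definition "ff N0 = mix N0 I P v"

lemma sum_u: "(\<Sum>u\<in>{0,1::nat}. sum (g :: 'i \<Rightarrow> 'a::comm_monoid_add) (A u)) = sum g I"
proof -
  have "I = A 0 \<union> A 1" "A 0 \<inter> A 1 = {}" using lab01 by (auto simp: A_def)
  then have "sum g I = sum g (A 0) + sum g (A 1)" using A_fin by (metis sum.union_disjoint)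
  then show ?thesis by simp
qed

lemma Pu_fu: "N0 > 0 \<Longrightarrow> u \<in> {0,1} \<Longrightarrow> Pu u * fu N0 u y = (\<Sum>i\<in>A u. P i * gs N0 (v i) y)"
  using Pu_pos[of u] by (simp add: fu_def mix_def qu_def sum_distrib_left)

lemma sum_Pu_fu: "N0 > 0 \<Longrightarrow> (\<Sum>u\<in>{0,1::nat}. Pu u * fu N0 u y) = ff N0 y"
proof -
  assume N: "N0 > 0"
  have "(\<Sum>u\<in>{0,1::nat}. Pu u * fu N0 u y) = (\<Sum>u\<in>{0,1::nat}. \<Sum>i\<in>A u. P i * gs N0 (v i) y)"
    using Pu_fu[OF N] by (intro sum.cong refl) auto
  also have "\<dots> = ff N0 y" unfolding sum_u ff_def mix_def ..
  finally show ?thesis .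
qed

definition "Jf N0 = (\<Sum>u\<in>{0,1::nat}. Pu u * (\<integral>y. fu N0 u y * ln (fu N0 u y / ff N0 y) \<partial>lborel))"

lemma fu_le: assumes N: "N0 > 0" and u: "u \<in> {0,1}" shows "Pu u * fu N0 u y \<le> ff N0 y"
proof -
  have "Pu u * fu N0 u y = (\<Sum>i\<in>A u. P i * gs N0 (v i) y)" by (rule Pu_fu[OF N u])
  also have "\<dots> \<le> (\<Sum>i\<in>I. P i * gs N0 (v i) y)"
  proof (rule sum_mono2[OF fin])
    show "A u \<subseteq> I" by (auto simp: A_def)
    show "0 \<le> P b * gs N0 (v b) y" if "b \<in> I - A u" for b
      using that Ppos[of b] gs_pos[OF N, of "v b" y] by simp
  qed
  finally show ?thesis by (simp add: ff_def mix_def)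
qed

lemma J_integrable: assumes N: "N0 > 0" and u: "u \<in> {0,1}"
  shows "integrable lborel (\<lambda>y. fu N0 u y * ln (fu N0 u y / ff N0 y))"
proof -
  interpret U: mixture N0 "A u" "qu u" v by (rule mix_u[OF N u])
  interpret F: mixture N0 I P v by (rule mix_all[OF N])
  have fu: "fu N0 u = U.m" by (simp add: fu_def fun_eq_iff)
  have ff: "ff N0 = F.m" by (simp add: ff_def fun_eq_iff)
  have Pu: "Pu u > 0" by (rule Pu_pos[OF u])
  show ?thesis
  proof (rule Bochner_Integration.integrable_bound)
    show "integrable lborel (\<lambda>y. ff N0 y + fu N0 u y + fu N0 u y / Pu u)"
      unfolding fu ff by (intro Bochner_Integration.integrable_add U.m_integrable F.m_integrable integrable_divide)
    show "AE y in lborel. norm (fu N0 u y * ln (fu N0 u y / ff N0 y)) \<le> norm (ff N0 y + fu N0 u y + fu N0 u y / Pu u)"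
    proof (intro AE_I2)
      fix y
      have a: "0 < fu N0 u y" "0 < ff N0 y" unfolding fu ff by (rule U.m_pos, rule F.m_pos)
      have lo: "fu N0 u y - ff N0 y \<le> fu N0 u y * ln (fu N0 u y / ff N0 y)" by (rule xlog_lower[OF a])
      have "ln (fu N0 u y / ff N0 y) \<le> fu N0 u y / ff N0 y - 1" using a by (intro ln_le_minus_one) auto
      then have "fu N0 u y * ln (fu N0 u y / ff N0 y) \<le> fu N0 u y * (fu N0 u y / ff N0 y - 1)"
        using a by (intro mult_left_mono) auto
      also have "\<dots> \<le> fu N0 u y * (1 / Pu u)"
      proof (intro mult_left_mono)
        have "Pu u * fu N0 u y \<le> ff N0 y" by (rule fu_le[OF N u])
        then have "fu N0 u y / ff N0 y \<le> 1 / Pu u" using a Pu by (simp add: field_simps)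
        then show "fu N0 u y / ff N0 y - 1 \<le> 1 / Pu u" by linarith
      qed (use a in auto)
      finally have up: "fu N0 u y * ln (fu N0 u y / ff N0 y) \<le> fu N0 u y / Pu u" by simp
      have "0 \<le> fu N0 u y / Pu u" using a Pu by simp
      then show "norm (fu N0 u y * ln (fu N0 u y / ff N0 y)) \<le> norm (ff N0 y + fu N0 u y + fu N0 u y / Pu u)"
        using lo up a by (simp add: abs_le_iff)
    qed
  qed (simp add: fu ff)
qed

lemma J_split: assumes N: "N0 > 0" and u: "u \<in> {0,1}"
  shows "integrable lborel (\<lambda>y. fu N0 u y * ln (ff N0 y / gs N0 w y))"
    and "(\<integral>y. fu N0 u y * ln (fu N0 u y / ff N0 y) \<partial>lborel)
       = mixture.kl N0 (A u) (qu u) v c + (2/N0) * ((mbar (A u) (qu u) v - w) \<bullet> (c - w) - (norm (c - w))\<^sup>2 / 2)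
         - (\<integral>y. fu N0 u y * ln (ff N0 y / gs N0 w y) \<partial>lborel)"
proof -
  interpret U: mixture N0 "A u" "qu u" v by (rule mix_u[OF N u])
  interpret F: mixture N0 I P v by (rule mix_all[OF N])
  have fu: "fu N0 u = U.m" by (simp add: fu_def fun_eq_iff)
  have ff: "ff N0 = F.m" by (simp add: ff_def fun_eq_iff)
  have pt: "fu N0 u y * ln (ff N0 y / gs N0 w y)
     = U.klf c y + fu N0 u y * ln (gs N0 c y / gs N0 w y) - fu N0 u y * ln (fu N0 u y / ff N0 y)" for y
  proof -
    have a: "0 < fu N0 u y" "0 < ff N0 y" unfolding fu ff by (rule U.m_pos, rule F.m_pos)
    have g: "0 < gs N0 c y" "0 < gs N0 w y" by (rule gs_pos[OF N])+
    have e: "ln (ff N0 y / gs N0 w y) = ln (fu N0 u y / gs N0 c y) + ln (gs N0 c y / gs N0 w y) - ln (fu N0 u y / ff N0 y)"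
      using a g by (simp add: ln_div)
    show ?thesis unfolding e U.klf_def fu by (simp add: algebra_simps)
  qed
  have i1: "integrable lborel (U.klf c)" by (rule U.klf_integrable)
  have i2: "integrable lborel (\<lambda>y. fu N0 u y * ln (gs N0 c y / gs N0 w y))" unfolding fu by (rule U.cross_integrable)
  have i3: "integrable lborel (\<lambda>y. fu N0 u y * ln (fu N0 u y / ff N0 y))" by (rule J_integrable[OF N u])
  show int: "integrable lborel (\<lambda>y. fu N0 u y * ln (ff N0 y / gs N0 w y))"
    unfolding pt by (intro Bochner_Integration.integrable_diff Bochner_Integration.integrable_add i1 i2 i3)
  have "(\<integral>y. fu N0 u y * ln (ff N0 y / gs N0 w y) \<partial>lborel)
     = integral\<^sup>L lborel (U.klf c) + (\<integral>y. fu N0 u y * ln (gs N0 c y / gs N0 w y) \<partial>lborel) - (\<integral>y. fu N0 u y * ln (fu N0 u y / ff N0 y) \<partial>lborel)"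
    unfolding pt by (simp add: i1 i2 i3 Bochner_Integration.integral_diff Bochner_Integration.integral_add Bochner_Integration.integrable_add)
  then show "(\<integral>y. fu N0 u y * ln (fu N0 u y / ff N0 y) \<partial>lborel)
       = mixture.kl N0 (A u) (qu u) v c + (2/N0) * ((mbar (A u) (qu u) v - w) \<bullet> (c - w) - (norm (c - w))\<^sup>2 / 2)
         - (\<integral>y. fu N0 u y * ln (ff N0 y / gs N0 w y) \<partial>lborel)"
    using U.cross_integral[of c w] by (simp add: U.kl_def fu)
qed

lemma J_decomp: assumes N: "N0 > 0"
  shows "Jf N0 = (\<Sum>u\<in>{0,1::nat}. Pu u * (mixture.kl N0 (A u) (qu u) v (c u)
        + (2/N0) * ((mbar (A u) (qu u) v - w) \<bullet> (c u - w) - (norm (c u - w))\<^sup>2 / 2)))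
      - mixture.kl N0 I P v w"
proof -
  interpret F: mixture N0 I P v by (rule mix_all[OF N])
  have ff: "ff N0 = F.m" by (simp add: ff_def fun_eq_iff)
  let ?T = "\<lambda>u y. fu N0 u y * ln (ff N0 y / gs N0 w y)"
  have "Jf N0 = (\<Sum>u\<in>{0,1::nat}. Pu u * (mixture.kl N0 (A u) (qu u) v (c u)
        + (2/N0) * ((mbar (A u) (qu u) v - w) \<bullet> (c u - w) - (norm (c u - w))\<^sup>2 / 2)))
      - (\<Sum>u\<in>{0,1::nat}. Pu u * integral\<^sup>L lborel (?T u))"
  proof -
    have "Jf N0 = (\<Sum>u\<in>{0,1::nat}. Pu u * (mixture.kl N0 (A u) (qu u) v (c u)
        + (2/N0) * ((mbar (A u) (qu u) v - w) \<bullet> (c u - w) - (norm (c u - w))\<^sup>2 / 2)) - Pu u * integral\<^sup>L lborel (?T u))"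
      unfolding Jf_def
    proof (intro sum.cong refl)
      fix u :: nat assume u: "u \<in> {0,1}"
      show "Pu u * (\<integral>y. fu N0 u y * ln (fu N0 u y / ff N0 y) \<partial>lborel) = Pu u * (mixture.kl N0 (A u) (qu u) v (c u)
        + (2/N0) * ((mbar (A u) (qu u) v - w) \<bullet> (c u - w) - (norm (c u - w))\<^sup>2 / 2)) - Pu u * integral\<^sup>L lborel (?T u)"
        unfolding J_split(2)[OF N u, of "c u" w] by (simp add: right_diff_distrib)
    qed
    then show ?thesis by (simp only: sum_subtractf)
  qed
  also have "(\<Sum>u\<in>{0,1::nat}. Pu u * integral\<^sup>L lborel (?T u)) = (\<integral>y. (\<Sum>u\<in>{0,1::nat}. Pu u * ?T u y) \<partial>lborel)"
    by (subst Bochner_Integration.integral_sum) (auto simp: J_split(1)[OF N] integrable_mult_right)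
  also have "(\<lambda>y. (\<Sum>u\<in>{0,1::nat}. Pu u * ?T u y)) = F.klf w"
  proof
    fix y
    have "(\<Sum>u\<in>{0,1::nat}. Pu u * ?T u y) = (\<Sum>u\<in>{0,1::nat}. Pu u * fu N0 u y) * ln (ff N0 y / gs N0 w y)"
      by (simp add: sum_distrib_right mult.assoc del: insert_iff)
    also have "\<dots> = ff N0 y * ln (ff N0 y / gs N0 w y)" by (simp only: sum_Pu_fu[OF N])
    finally show "(\<Sum>u\<in>{0,1::nat}. Pu u * ?T u y) = F.klf w y"
      by (simp add: F.klf_def ff)
  qed
  finally show ?thesis by (simp add: F.kl_def)
qed

lemma J_nonneg: assumes N: "N0 > 0" shows "0 \<le> Jf N0"
proof -
  have "Jf N0 = (\<integral>y. (\<Sum>u\<in>{0,1::nat}. Pu u * (fu N0 u y * ln (fu N0 u y / ff N0 y))) \<partial>lborel)"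
    unfolding Jf_def
    by (subst Bochner_Integration.integral_sum) (auto simp: J_integrable[OF N] integrable_mult_right)
  also have "\<dots> \<ge> 0"
  proof (rule integral_nonneg_AE, intro AE_I2)
    fix y
    have "(\<Sum>u\<in>{0,1::nat}. Pu u * (fu N0 u y - ff N0 y)) \<le> (\<Sum>u\<in>{0,1::nat}. Pu u * (fu N0 u y * ln (fu N0 u y / ff N0 y)))"
    proof (intro sum_mono mult_left_mono)
      fix u :: nat assume u: "u \<in> {0,1}"
      interpret U: mixture N0 "A u" "qu u" v by (rule mix_u[OF N u])
      interpret F: mixture N0 I P v by (rule mix_all[OF N])
      show "fu N0 u y - ff N0 y \<le> fu N0 u y * ln (fu N0 u y / ff N0 y)"
        using U.m_pos F.m_pos by (intro xlog_lower) (auto simp: fu_def ff_def)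
      show "0 \<le> Pu u" using Pu_pos[OF u] by simp
    qed
    moreover have "(\<Sum>u\<in>{0,1::nat}. Pu u * (fu N0 u y - ff N0 y)) = 0"
    proof -
      have "(\<Sum>u\<in>{0,1::nat}. Pu u * (fu N0 u y - ff N0 y)) = (\<Sum>u\<in>{0,1::nat}. Pu u * fu N0 u y) - (\<Sum>u\<in>{0,1::nat}. Pu u) * ff N0 y"
        by (simp only: right_diff_distrib sum_subtractf sum_distrib_right)
      also have "(\<Sum>u\<in>{0,1::nat}. Pu u) = 1" unfolding Pu_def sum_u Psum ..
      finally show ?thesis by (simp only: sum_Pu_fu[OF N])
    qed
    ultimately show "0 \<le> (\<Sum>u\<in>{0,1::nat}. Pu u * (fu N0 u y * ln (fu N0 u y / ff N0 y)))" by simp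
  qed
  finally show ?thesis .
qed

lemma J_upper: assumes N: "N0 > 0" shows "N0 * Jf N0 \<le> (\<Sum>i\<in>I. P i * (norm (v i))\<^sup>2)"
proof -
  interpret F: mixture N0 I P v by (rule mix_all[OF N])
  have "Jf N0 = (\<Sum>u\<in>{0,1::nat}. Pu u * mixture.kl N0 (A u) (qu u) v 0) - F.kl 0"
    using J_decomp[OF N, of "\<lambda>_. 0" 0] by simp
  also have "\<dots> \<le> (\<Sum>u\<in>{0,1::nat}. Pu u * (\<Sum>i\<in>A u. qu u i * ((2/N0) * (norm (v i))\<^sup>2 / 2)))"
  proof -
    have "(\<Sum>u\<in>{0,1::nat}. Pu u * mixture.kl N0 (A u) (qu u) v 0) \<le> (\<Sum>u\<in>{0,1::nat}. Pu u * (\<Sum>i\<in>A u. qu u i * ((2/N0) * (norm (v i))\<^sup>2 / 2)))"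
    proof (intro sum_mono mult_left_mono)
      fix u :: nat assume u: "u \<in> {0,1}"
      interpret U: mixture N0 "A u" "qu u" v by (rule mix_u[OF N u])
      show "U.kl 0 \<le> (\<Sum>i\<in>A u. qu u i * ((2/N0) * (norm (v i))\<^sup>2 / 2))" using U.kl_logsum[of 0] by simp
      show "0 \<le> Pu u" using Pu_pos[OF u] by simp
    qed
    then show ?thesis using F.kl_nonneg[of 0] by simp
  qed
  also have "\<dots> = (\<Sum>u\<in>{0,1::nat}. \<Sum>i\<in>A u. P i * (norm (v i))\<^sup>2) / N0"
  proof -
    have "Pu u * (\<Sum>i\<in>A u. qu u i * ((2/N0) * (norm (v i))\<^sup>2 / 2)) = (\<Sum>i\<in>A u. P i * (norm (v i))\<^sup>2) / N0"
      if "u \<in> {0,1}" for u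
      using Pu_pos[OF that] by (simp add: qu_def sum_distrib_left sum_divide_distrib)
    then have "(\<Sum>u\<in>{0,1::nat}. Pu u * (\<Sum>i\<in>A u. qu u i * ((2/N0) * (norm (v i))\<^sup>2 / 2)))
       = (\<Sum>u\<in>{0,1::nat}. (\<Sum>i\<in>A u. P i * (norm (v i))\<^sup>2) / N0)" by (intro sum.cong refl) auto
    then show ?thesis by (simp only: sum_divide_distrib)
  qed
  also have "\<dots> = (\<Sum>i\<in>I. P i * (norm (v i))\<^sup>2) / N0" by (simp only: sum_u)
  finally show ?thesis using N by (simp add: field_simps)
qed

lemma J_lim: "((\<lambda>N0. N0 * Jf N0) \<longlongrightarrow> (\<Sum>u\<in>{0,1::nat}. Pu u * (norm (mbar (A u) (qu u) v - mbar I P v))\<^sup>2)) at_top"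
proof -
  let ?d = "\<lambda>u. (norm (mbar (A u) (qu u) v - mbar I P v))\<^sup>2"
  let ?K = "\<lambda>u N0. N0 * mixture.kl N0 (A u) (qu u) v (mbar (A u) (qu u) v)"
  let ?KI = "\<lambda>N0. N0 * mixture.kl N0 I P v (mbar I P v)"
  have Ku: "(?K u \<longlongrightarrow> 0) at_top" if "u \<in> {0,1}" for u
    using A_fin qu_sum[OF that] Pu_pos[OF that] Ppos
    by (intro kl_lim) (auto simp: qu_def A_def)
  have KI: "(?KI \<longlongrightarrow> 0) at_top" by (intro kl_lim fin Ppos Psum)
  have eq: "N0 * Jf N0 = (\<Sum>u\<in>{0,1::nat}. Pu u * (?K u N0 + ?d u)) - ?KI N0" if N: "N0 > 0" for N0
  proof -
    have "Jf N0 = (\<Sum>u\<in>{0,1::nat}. Pu u * (mixture.kl N0 (A u) (qu u) v (mbar (A u) (qu u) v) + ?d u / N0)) - mixture.kl N0 I P v (mbar I P v)"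
      unfolding J_decomp[OF N, of "\<lambda>u. mbar (A u) (qu u) v" "mbar I P v"]
      by (simp add: power2_norm_eq_inner field_simps)
    then have "N0 * Jf N0 = (\<Sum>u\<in>{0,1::nat}. N0 * (Pu u * (mixture.kl N0 (A u) (qu u) v (mbar (A u) (qu u) v) + ?d u / N0))) - ?KI N0"
      by (simp only: right_diff_distrib sum_distrib_left)
    also have "(\<Sum>u\<in>{0,1::nat}. N0 * (Pu u * (mixture.kl N0 (A u) (qu u) v (mbar (A u) (qu u) v) + ?d u / N0)))
        = (\<Sum>u\<in>{0,1::nat}. Pu u * (?K u N0 + ?d u))"
      using N by (intro sum.cong refl) (simp add: field_simps)
    finally show ?thesis .
  qed
  have "((\<lambda>N0. (\<Sum>u\<in>{0,1::nat}. Pu u * (?K u N0 + ?d u)) - ?KI N0) \<longlongrightarrow> (\<Sum>u\<in>{0,1::nat}. Pu u * (0 + ?d u)) - 0) at_top"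
    by (intro tendsto_intros Ku KI) auto
  then have "((\<lambda>N0. (\<Sum>u\<in>{0,1::nat}. Pu u * (?K u N0 + ?d u)) - ?KI N0) \<longlongrightarrow> (\<Sum>u\<in>{0,1::nat}. Pu u * ?d u)) at_top"
    by simp
  moreover have "\<forall>\<^sub>F N0 in at_top. (\<Sum>u\<in>{0,1::nat}. Pu u * (?K u N0 + ?d u)) - ?KI N0 = N0 * Jf N0"
    using eventually_gt_at_top[of "0::real"] by eventually_elim (simp add: eq)
  ultimately show ?thesis by (rule Lim_transform_eventually)
qed

end


lemma vec_nth_meas[measurable]: "(\<lambda>x::real^'n::finite. x $ n) \<in> borel_measurable borel"
  by (intro borel_measurable_continuous_onI continuous_intros)

lemma gauss_ch_meas2: "(\<lambda>z. gauss_ch N0 (fst z) xv (snd z)) \<in> borel_measurable (borel \<Otimes>\<^sub>M (borel :: (real^'n::finite) measure))"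
  unfolding gauss_ch_def by measurable

lemma cond_meas2: "(\<lambda>z. cond_dens m p x N0 k u (fst z) (snd z) * log 2 (cond_dens m p x N0 k u (fst z) (snd z) / out_dens m p x N0 (fst z) (snd z))) \<in> borel_measurable (borel \<Otimes>\<^sub>M (lborel :: (real^'n::finite) measure))"
  unfolding cond_dens_def out_dens_def gauss_ch_def by measurable

lemma inner_meas: "(\<lambda>h. \<integral>y. cond_dens m p x N0 k u h y * log 2 (cond_dens m p x N0 k u h y / out_dens m p x N0 h y) \<partial>lborel) \<in> borel_measurable (borel :: (real^'n::finite) measure)"
proof -
  have "(\<lambda>(h, y). cond_dens m p x N0 k u h y * log 2 (cond_dens m p x N0 k u h y / out_dens m p x N0 h y)) \<in> borel_measurable (borel \<Otimes>\<^sub>M lborel)"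
    using cond_meas2 by (simp add: case_prod_beta')
  then show ?thesis by (rule lborel.borel_measurable_lebesgue_integral)
qed


definition cmean :: "nat \<Rightarrow> (nat \<Rightarrow> real) \<Rightarrow> (nat \<Rightarrow> real^'n) \<Rightarrow> nat \<Rightarrow> nat \<Rightarrow> real^'n" where
  "cmean m p x k u = (\<Sum>i\<in>{i. i < 2^m \<and> nbit i k = u}. (symprob m p i / bitprob p k u) *\<^sub>R x i)"

definition Psi :: "nat \<Rightarrow> (nat \<Rightarrow> real) \<Rightarrow> (nat \<Rightarrow> real^'n::finite) \<Rightarrow> nat \<Rightarrow> real^'n \<Rightarrow> real \<Rightarrow> real" where
  "Psi m p x k h N0 = (\<Sum>u\<in>{0, 1::nat}. bitprob p k u *
        (\<integral>y. cond_dens m p x N0 k u h y * log 2 (cond_dens m p x N0 k u h y / out_dens m p x N0 h y) \<partial>lborel))"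

locale cst =
  fixes m :: nat and p :: "nat \<Rightarrow> real"
  assumes hp: "\<forall>k<m. 0 < p k \<and> p k < 1"
begin

lemma bitprob_pos: "k < m \<Longrightarrow> u = 0 \<or> u = 1 \<Longrightarrow> 0 < bitprob p k u"
  using hp by (auto simp: bitprob_def)

lemma symprob_pos: "0 < symprob m p i"
  unfolding symprob_def using bitprob_pos nbit_cases by (intro prod_pos) auto

lemma symprob_sum: "(\<Sum>i<2^m. symprob m p i) = 1"
  unfolding symprob_def by (subst sum_prod_bits) (simp add: bitprob_def)

lemma symprob_sum_bit: assumes k: "k < m" and u: "u = 0 \<or> u = 1"
  shows "(\<Sum>i\<in>{i. i < 2^m \<and> nbit i k = u}. symprob m p i) = bitprob p k u"
proof -
  let ?f = "\<lambda>k' c. if k' = k then (if c = u then bitprob p k c else 0) else bitprob p k' c"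
  have "(\<Sum>i\<in>{i. i < 2^m \<and> nbit i k = u}. symprob m p i) = (\<Sum>i<2^m. if nbit i k = u then symprob m p i else 0)"
    by (simp add: sum.If_cases Int_def conj_commute lessThan_def)
  also have "\<dots> = (\<Sum>i<2^m. \<Prod>k'<m. ?f k' (nbit i k'))"
  proof (intro sum.cong refl)
    fix i
    show "(if nbit i k = u then symprob m p i else 0) = (\<Prod>k'<m. ?f k' (nbit i k'))"
    proof (cases "nbit i k = u")
      case True
      have "symprob m p i = (\<Prod>k'<m. ?f k' (nbit i k'))"
        unfolding symprob_def using True by (intro prod.cong refl) auto
      then show ?thesis using True by simp
    next
      case False
      then have "(\<Prod>k'<m. ?f k' (nbit i k')) = 0" using k by (intro prod_zero) (auto intro!: bexI[of _ k])
      then show ?thesis using False by simp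
    qed
  qed
  also have "\<dots> = (\<Prod>k'<m. ?f k' 0 + ?f k' 1)" by (rule sum_prod_bits)
  also have "\<dots> = (\<Prod>k'<m. if k' = k then bitprob p k u else 1)"
    using u by (intro prod.cong refl) (auto simp: bitprob_def)
  also have "\<dots> = bitprob p k u" using k by (simp add: prod.delta)
  finally show ?thesis .
qed

lemma bs: assumes k: "k < m" shows "bitsetup {..<2^m} (symprob m p) (\<lambda>i. nbit i k)"
proof
  show "sum (symprob m p) {i \<in> {..<2^m}. nbit i k = u} > 0 \<or> u \<notin> {0,1}" for u
  proof (cases "u \<in> {0,1}")
    case True
    then have "{i \<in> {..<2^m}. nbit i k = u} = {i. i < 2^m \<and> nbit i k = u}" by auto
    then show ?thesis using symprob_sum_bit[OF k, of u] bitprob_pos[OF k, of u] True by auto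
  qed simp
qed (use nbit_cases in \<open>auto simp: symprob_pos symprob_sum\<close>)

lemma Psi_eq: assumes k: "k < m" and N: "N0 > 0"
  shows "(\<Sum>u\<in>{0, 1::nat}. bitprob p k u *
        (\<integral>y. cond_dens m p x N0 k u h y * log 2 (cond_dens m p x N0 k u h y / out_dens m p x N0 h y) \<partial>lborel))
    = bitsetup.Jf {..<2^m} (symprob m p) (\<lambda>i. nbit i k) (\<lambda>i. h * x i) N0 / ln 2"
proof -
  interpret B: bitsetup "{..<2^m}" "symprob m p" "\<lambda>i. nbit i k" "\<lambda>i. h * x i" by (rule bs[OF k])
  have A: "B.A u = {i. i < 2^m \<and> nbit i k = u}" for u by (auto simp: B.A_def)
  have Pu: "B.Pu u = bitprob p k u" if "u \<in> {0,1}" for u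
    using symprob_sum_bit[OF k, of u] that by (auto simp: B.Pu_def A)
  have cd: "cond_dens m p x N0 k u h = B.fu N0 u" if "u \<in> {0,1}" for u
    by (simp add: fun_eq_iff cond_dens_def B.fu_def mix_def A B.qu_def Pu[OF that] gauss_ch_gs sum_divide_distrib)
  have od: "out_dens m p x N0 h = B.ff N0"
    by (simp add: fun_eq_iff out_dens_def B.ff_def mix_def gauss_ch_gs)
  have "(\<Sum>u\<in>{0, 1::nat}. bitprob p k u *
        (\<integral>y. cond_dens m p x N0 k u h y * log 2 (cond_dens m p x N0 k u h y / out_dens m p x N0 h y) \<partial>lborel))
      = (\<Sum>u\<in>{0, 1::nat}. B.Pu u * (\<integral>y. B.fu N0 u y * ln (B.fu N0 u y / B.ff N0 y) \<partial>lborel) / ln 2)"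
  proof (intro sum.cong refl)
    fix u :: nat assume u: "u \<in> {0,1}"
    have "(\<integral>y. B.fu N0 u y * log 2 (B.fu N0 u y / B.ff N0 y) \<partial>lborel) = (\<integral>y. B.fu N0 u y * ln (B.fu N0 u y / B.ff N0 y) / ln 2 \<partial>lborel)"
      by (simp add: log_def)
    also have "\<dots> = (\<integral>y. B.fu N0 u y * ln (B.fu N0 u y / B.ff N0 y) \<partial>lborel) / ln 2"
      by simp
    finally show "bitprob p k u * (\<integral>y. cond_dens m p x N0 k u h y * log 2 (cond_dens m p x N0 k u h y / out_dens m p x N0 h y) \<partial>lborel)
      = B.Pu u * (\<integral>y. B.fu N0 u y * ln (B.fu N0 u y / B.ff N0 y) \<partial>lborel) / ln 2"
      using u by (simp add: cd od Pu)
  qed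
  also have "\<dots> = B.Jf N0 / ln 2" unfolding B.Jf_def by (simp only: sum_divide_distrib)
  finally show ?thesis .
qed

lemma mbar_h: assumes k: "k < m" and u: "u \<in> {0,1}"
  shows "mbar (bitsetup.A {..<2^m} (\<lambda>i. nbit i k) u) (bitsetup.qu {..<2^m} (symprob m p) (\<lambda>i. nbit i k) u) (\<lambda>i. h * x i)
    = h * cmean m p x k u"
proof -
  interpret B: bitsetup "{..<2^m}" "symprob m p" "\<lambda>i. nbit i k" by (rule bs[OF k])
  have A: "B.A u = {i. i < 2^m \<and> nbit i k = u}" by (auto simp: B.A_def)
  have Pu: "B.Pu u = bitprob p k u"
    using symprob_sum_bit[OF k, of u] u by (auto simp: B.Pu_def A)
  show ?thesis
    unfolding mbar_def cmean_def A B.qu_def Pu by (simp add: vec_eq_iff sum_distrib_left mult_ac)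
qed

lemma mbar_all: "mbar {..<2^m} (symprob m p) (\<lambda>i. h * x i) = h * mean_sym m p x"
  unfolding mbar_def mean_sym_def by (simp add: vec_eq_iff sum_distrib_left mult_ac)

lemma Psi_bounds: assumes k: "k < m" and N: "N0 > 0"
  shows "0 \<le> N0 * Psi m p x k h N0"
    and "N0 * Psi m p x k h N0 \<le> (\<Sum>i<2^m. symprob m p i * (norm (h * x i))\<^sup>2) / ln 2"
proof -
  interpret B: bitsetup "{..<2^m}" "symprob m p" "\<lambda>i. nbit i k" "\<lambda>i. h * x i" by (rule bs[OF k])
  have eq: "Psi m p x k h N0 = B.Jf N0 / ln 2" unfolding Psi_def by (rule Psi_eq[OF k N])
  show "0 \<le> N0 * Psi m p x k h N0" unfolding eq using B.J_nonneg[OF N] N by simp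
  show "N0 * Psi m p x k h N0 \<le> (\<Sum>i<2^m. symprob m p i * (norm (h * x i))\<^sup>2) / ln 2"
    unfolding eq using B.J_upper[OF N] by (simp add: divide_right_mono)
qed

lemma Psi_lim: assumes k: "k < m"
  shows "((\<lambda>N0. N0 * Psi m p x k h N0) \<longlongrightarrow>
     (\<Sum>u\<in>{0,1::nat}. bitprob p k u * (norm (h * (cmean m p x k u - mean_sym m p x)))\<^sup>2) / ln 2) at_top"
proof -
  interpret B: bitsetup "{..<2^m}" "symprob m p" "\<lambda>i. nbit i k" "\<lambda>i. h * x i" by (rule bs[OF k])
  have A: "B.A u = {i. i < 2^m \<and> nbit i k = u}" for u by (auto simp: B.A_def)
  have Pu: "B.Pu u = bitprob p k u" if "u \<in> {0,1}" for u
    using symprob_sum_bit[OF k, of u] that by (auto simp: B.Pu_def A)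
  have L: "((\<lambda>N0. N0 * B.Jf N0 / ln 2) \<longlongrightarrow> (\<Sum>u\<in>{0,1::nat}. B.Pu u * (norm (mbar (B.A u) (B.qu u) (\<lambda>i. h * x i) - mbar {..<2^m} (symprob m p) (\<lambda>i. h * x i)))\<^sup>2) / ln 2) at_top"
    by (intro tendsto_divide B.J_lim tendsto_const) simp
  have E: "(\<Sum>u\<in>{0,1::nat}. B.Pu u * (norm (mbar (B.A u) (B.qu u) (\<lambda>i. h * x i) - mbar {..<2^m} (symprob m p) (\<lambda>i. h * x i)))\<^sup>2)
      = (\<Sum>u\<in>{0,1::nat}. bitprob p k u * (norm (h * (cmean m p x k u - mean_sym m p x)))\<^sup>2)"
    by (intro sum.cong refl) (simp add: Pu mbar_h[OF k] mbar_all ring_distribs)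
  have EV: "\<forall>\<^sub>F N0 in at_top. N0 * B.Jf N0 / ln 2 = N0 * Psi m p x k h N0"
    using eventually_gt_at_top[of "0::real"]
  proof eventually_elim
    case (elim N0)
    have "Psi m p x k h N0 = B.Jf N0 / ln 2" unfolding Psi_def by (rule Psi_eq[OF k elim])
    then show ?case by simp
  qed
  from L[unfolded E] EV show ?thesis by (rule Lim_transform_eventually)
qed

end


locale hdl =
  fixes HD :: "(real^'n::finite) measure" and pH :: "real \<Rightarrow> real"
  assumes ps: "prob_space HD" and sHD: "sets HD = sets borel"
    and pHm: "pH \<in> borel_measurable borel" and pHn: "\<forall>t. 0 \<le> pH t"
    and marg: "\<forall>n. distr HD lborel (\<lambda>h. h $ n) = density lborel (\<lambda>t. ennreal (pH t))"
    and int2: "integrable lborel (\<lambda>t. t\<^sup>2 * pH t)"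
begin

lemma meas_HD: "f \<in> borel_measurable borel \<Longrightarrow> f \<in> borel_measurable HD"
  using measurable_cong_sets[OF sHD refl] by blast

lemma nth_meas: "(\<lambda>h. h $ n) \<in> measurable HD lborel"
  unfolding measurable_lborel1 by (rule meas_HD) simp

lemma sq_int: "integrable HD (\<lambda>h. (h $ n)\<^sup>2)"
proof -
  have "integrable (density lborel (\<lambda>t. ennreal (pH t))) (\<lambda>t::real. t\<^sup>2)"
    using int2 pHn pHm by (subst integrable_density) (auto simp: mult.commute)
  then have "integrable (distr HD lborel (\<lambda>h. h $ n)) (\<lambda>t::real. t\<^sup>2)" using marg by simp
  then show ?thesis by (subst (asm) integrable_distr_eq[OF nth_meas]) auto
qed

lemma sq_integral: "(\<integral>h. (h $ n)\<^sup>2 \<partial>HD) = sec_moment pH"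
proof -
  have "(\<integral>h. (h $ n)\<^sup>2 \<partial>HD) = (\<integral>t. t\<^sup>2 \<partial>distr HD lborel (\<lambda>h. h $ n))"
    by (rule integral_distr[OF nth_meas, symmetric]) simp
  also have "\<dots> = (\<integral>t. t\<^sup>2 \<partial>density lborel (\<lambda>t. ennreal (pH t)))" using marg by simp
  also have "\<dots> = (\<integral>t. pH t * t\<^sup>2 \<partial>lborel)"
    using pHn pHm by (subst integral_density) auto
  also have "\<dots> = sec_moment pH" by (simp add: sec_moment_def mult.commute)
  finally show ?thesis .
qed

lemma quad_int: "integrable HD (\<lambda>h. (norm (h * z))\<^sup>2)"
  and quad_integral: "(\<integral>h. (norm (h * z))\<^sup>2 \<partial>HD) = sec_moment pH * (norm z)\<^sup>2"
proof -
  have e: "(norm (h * z))\<^sup>2 = (\<Sum>n\<in>UNIV. (z $ n)\<^sup>2 * (h $ n)\<^sup>2)" for h :: "real^'n"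
    unfolding power2_norm_eq_inner inner_vec_real by (simp add: power2_eq_square mult_ac)
  show "integrable HD (\<lambda>h. (norm (h * z))\<^sup>2)"
    unfolding e by (intro Bochner_Integration.integrable_sum integrable_mult_right sq_int)
  have "(\<integral>h. (norm (h * z))\<^sup>2 \<partial>HD) = (\<Sum>n\<in>UNIV. (z $ n)\<^sup>2 * sec_moment pH)"
    unfolding e by (simp add: Bochner_Integration.integral_sum integrable_mult_right sq_int sq_integral)
  also have "\<dots> = sec_moment pH * (norm z)\<^sup>2"
    unfolding power2_norm_eq_inner inner_vec_real by (simp add: power2_eq_square sum_distrib_left mult_ac)
  finally show "(\<integral>h. (norm (h * z))\<^sup>2 \<partial>HD) = sec_moment pH * (norm z)\<^sup>2" .
qed

end

lemma Psi_meas: "(\<lambda>h. Psi m p x k h N0) \<in> borel_measurable (borel :: (real^'n::finite) measure)"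
  unfolding Psi_def by (intro borel_measurable_sum borel_measurable_times borel_measurable_const inner_meas)

locale full = cst m p + hdl HD pH for m p and HD :: "(real^'n::finite) measure" and pH +
  fixes x :: "nat \<Rightarrow> real^'n"
begin

definition "W h = (\<Sum>i<2^m. symprob m p i * (norm (h * x i))\<^sup>2) / ln 2"
definition "Lam h = (\<Sum>k<m. (\<Sum>u\<in>{0,1::nat}. bitprob p k u * (norm (h * (cmean m p x k u - mean_sym m p x)))\<^sup>2) / ln 2)"
definition "Qv = (\<Sum>k<m. \<Sum>u\<in>{0,1::nat}. bitprob p k u * (norm (cmean m p x k u - mean_sym m p x))\<^sup>2)"
definition "Tot h t = (\<Sum>k<m. Psi m p x k h t)"

lemma W_int: "integrable HD W"
  unfolding W_def by (intro integrable_divide Bochner_Integration.integrable_sum integrable_mult_right quad_int)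

lemma Lam_int: "integrable HD Lam"
  unfolding Lam_def by (intro integrable_divide Bochner_Integration.integrable_sum integrable_mult_right quad_int)

lemma Lam_integral: "integral\<^sup>L HD Lam = sec_moment pH * Qv / ln 2"
  unfolding Lam_def Qv_def
  by (simp add: Bochner_Integration.integral_sum integrable_mult_right quad_int quad_integral
      Bochner_Integration.integrable_sum sum_distrib_left sum_divide_distrib mult_ac distrib_left)

lemma Tot_meas: "(\<lambda>h. Tot h t) \<in> borel_measurable HD"
  unfolding Tot_def by (intro borel_measurable_sum meas_HD Psi_meas)

lemma Psi_int: "N0 > 0 \<Longrightarrow> k < m \<Longrightarrow> integrable HD (\<lambda>h. Psi m p x k h N0)"
proof (rule Bochner_Integration.integrable_bound)
  assume N: "N0 > 0" and k: "k < m"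
  show "integrable HD (\<lambda>h. W h / N0)" by (intro integrable_divide W_int)
  show "AE h in HD. norm (Psi m p x k h N0) \<le> norm (W h / N0)"
  proof (intro AE_I2)
    fix h
    have "0 \<le> N0 * Psi m p x k h N0" "N0 * Psi m p x k h N0 \<le> W h"
      using Psi_bounds[OF k N, of x h] by (auto simp: W_def)
    then have "0 \<le> Psi m p x k h N0" "Psi m p x k h N0 \<le> W h / N0"
      using N by (auto simp: field_simps zero_le_mult_iff)
    moreover have "0 \<le> W h / N0" using \<open>0 \<le> Psi m p x k h N0\<close> \<open>Psi m p x k h N0 \<le> W h / N0\<close> by linarith
    then have "norm (W h / N0) = W h / N0" unfolding real_norm_def by (rule abs_of_nonneg)
    ultimately show "norm (Psi m p x k h N0) \<le> norm (W h / N0)" by simp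
  qed
qed (intro meas_HD Psi_meas)

lemma bicm_eq: "N0 > 0 \<Longrightarrow> bicm_gmi m p x N0 HD = (\<integral>h. Tot h N0 \<partial>HD)"
proof -
  assume N: "N0 > 0"
  have "bicm_gmi m p x N0 HD = (\<Sum>k<m. \<integral>h. Psi m p x k h N0 \<partial>HD)"
    unfolding bicm_gmi_def bit_mi_def Psi_def ..
  also have "\<dots> = (\<integral>h. Tot h N0 \<partial>HD)"
    unfolding Tot_def by (rule Bochner_Integration.integral_sum[symmetric]) (simp add: Psi_int N)
  finally show ?thesis .
qed

lemma T_lim: "((\<lambda>t. \<integral>h. t * Tot h t \<partial>HD) \<longlongrightarrow> integral\<^sup>L HD Lam) at_top"
proof (rule integral_dominated_convergence_at_top[where w="\<lambda>h. real m * W h"])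
  show "Lam \<in> borel_measurable HD" using Lam_int by (rule borel_measurable_integrable)
  show "(\<lambda>h. t * Tot h t) \<in> borel_measurable HD" for t using Tot_meas by measurable
  show "integrable HD (\<lambda>h. real m * W h)" by (intro integrable_mult_right W_int)
  show "AE h in HD. ((\<lambda>t. t * Tot h t) \<longlongrightarrow> Lam h) at_top"
  proof (intro AE_I2)
    fix h
    have "((\<lambda>t. \<Sum>k<m. t * Psi m p x k h t) \<longlongrightarrow> Lam h) at_top"
      unfolding Lam_def by (intro tendsto_sum Psi_lim) auto
    then show "((\<lambda>t. t * Tot h t) \<longlongrightarrow> Lam h) at_top" by (simp add: Tot_def sum_distrib_left)
  qed
  show "\<forall>\<^sub>F t in at_top. AE h in HD. norm (t * Tot h t) \<le> real m * W h"
    using eventually_gt_at_top[of "0::real"]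
  proof eventually_elim
    case (elim t)
    show ?case
    proof (intro AE_I2)
      fix h
      have "0 \<le> t * Tot h t" "t * Tot h t \<le> real m * W h"
      proof -
        have b: "0 \<le> t * Psi m p x k h t" "t * Psi m p x k h t \<le> W h" if "k < m" for k
          using Psi_bounds[OF that elim, of x h] by (auto simp: W_def)
        have "t * Tot h t = (\<Sum>k<m. t * Psi m p x k h t)" by (simp add: Tot_def sum_distrib_left)
        moreover have "(\<Sum>k<m. t * Psi m p x k h t) \<le> (\<Sum>k<m. W h)" using b by (intro sum_mono) auto
        moreover have "0 \<le> (\<Sum>k<m. t * Psi m p x k h t)" using b by (intro sum_nonneg) auto
        ultimately show "0 \<le> t * Tot h t" "t * Tot h t \<le> real m * W h" by auto
      qed
      then show "norm (t * Tot h t) \<le> real m * W h" by simp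
    qed
  qed
qed

lemma gmi_lim: assumes Es: "energy_sym m p x > 0" and sm: "sec_moment pH > 0"
  shows "((\<lambda>s. gmi_of_snr m p x (sec_moment pH) HD s / s) \<longlongrightarrow> Qv / (energy_sym m p x * ln 2)) (at_right 0)"
proof -
  define c where "c = sec_moment pH * energy_sym m p x"
  have c: "c > 0" using Es sm by (simp add: c_def)
  have F: "filterlim (\<lambda>s. c * inverse s) at_top (at_right (0::real))"
    by (rule filterlim_tendsto_pos_mult_at_top[OF tendsto_const c filterlim_inverse_at_top_right])
  have L: "((\<lambda>s. (\<integral>h. (c * inverse s) * Tot h (c * inverse s) \<partial>HD) / c) \<longlongrightarrow> integral\<^sup>L HD Lam / c) (at_right 0)"
    by (intro tendsto_divide tendsto_const filterlim_compose[OF T_lim F]) (use c in simp)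
  have V: "integral\<^sup>L HD Lam / c = Qv / (energy_sym m p x * ln 2)"
    using sm Es by (simp add: Lam_integral c_def field_simps)
  have EV: "\<forall>\<^sub>F s in at_right 0. (\<integral>h. (c * inverse s) * Tot h (c * inverse s) \<partial>HD) / c = gmi_of_snr m p x (sec_moment pH) HD s / s"
    using eventually_at_right_less[of "0::real"]
  proof eventually_elim
    case (elim s)
    then have s: "0 < s" .
    have "gmi_of_snr m p x (sec_moment pH) HD s = bicm_gmi m p x (c * inverse s) HD"
      using s by (simp add: gmi_of_snr_def c_def field_simps)
    also have "\<dots> = (\<integral>h. Tot h (c * inverse s) \<partial>HD)"
      by (rule bicm_eq) (use c s in simp)
    finally show "(\<integral>h. (c * inverse s) * Tot h (c * inverse s) \<partial>HD) / c = gmi_of_snr m p x (sec_moment pH) HD s / s"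
      using c s by (simp add: field_simps)
  qed
  show ?thesis using Lim_transform_eventually[OF L EV] unfolding V .
qed

end


definition rho :: "(nat \<Rightarrow> real) \<Rightarrow> nat \<Rightarrow> nat \<Rightarrow> real" where
  "rho p k c = (if c = 0 then sqrt (1 - p k) / sqrt (p k) else - sqrt (p k) / sqrt (1 - p k))"

definition Rv :: "nat \<Rightarrow> (nat \<Rightarrow> real) \<Rightarrow> (nat \<Rightarrow> real^'n) \<Rightarrow> nat \<Rightarrow> real^'n" where
  "Rv m p x k = (\<Sum>j<2^m. (symprob m p j * rho p k (nbit j k)) *\<^sub>R x j)"

lemma rho_unif: "rho uniform_bits k c = (if c = 0 then 1 else -1)"
  by (simp add: rho_def uniform_bits_def)

lemma bit_factor: assumes p: "0 < p k" "p k < 1" and d: "d = 0 \<or> d = 1"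
  shows "(1/2) * (rho uniform_bits k 0 * G p k 0 d) * sqrt (bitprob p k d) + (1/2) * (rho uniform_bits k 1 * G p k 1 d) * sqrt (bitprob p k d)
     = bitprob p k d * rho p k d"
proof -
  define a where "a = sqrt (p k)"
  define b where "b = sqrt (1 - p k)"
  have a: "a > 0" "b > 0" using p by (auto simp: a_def b_def)
  have sq: "p k = a * a" "1 - p k = b * b" using p by (auto simp: a_def b_def)
  have G: "G p k 0 0 = a + b" "G p k 1 0 = a - b" "G p k 0 1 = b - a" "G p k 1 1 = a + b"
    by (auto simp: G_def a_def b_def)
  have r: "rho p k 0 = b / a" "rho p k 1 = - a / b" by (auto simp: rho_def a_def b_def)
  have bp: "bitprob p k 0 = a * a" "bitprob p k 1 = b * b" using sq by (auto simp: bitprob_def)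
  have sb: "sqrt (bitprob p k 0) = a" "sqrt (bitprob p k 1) = b" unfolding bp using a by auto
  show ?thesis using d
  proof
    assume d0: "d = 0"
    show ?thesis unfolding d0 rho_unif G r bp sb using a by (simp add: field_simps)
  next
    assume d1: "d = 1"
    show ?thesis unfolding d1 rho_unif G r bp sb using a by (simp add: field_simps)
  qed
qed

lemma bit_factor': assumes p: "0 \<le> p k" "p k \<le> 1" and d: "d = 0 \<or> d = 1"
  shows "(1/2) * G p k 0 d * sqrt (bitprob p k d) + (1/2) * G p k 1 d * sqrt (bitprob p k d) = bitprob p k d"
proof -
  have "(1/2) * G p k 0 d * sqrt (bitprob p k d) + (1/2) * G p k 1 d * sqrt (bitprob p k d)
     = (1/2) * (G p k 0 d + G p k 1 d) * sqrt (bitprob p k d)" by (simp add: algebra_simps)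
  also have "\<dots> = sqrt (bitprob p k d) * sqrt (bitprob p k d)" by (simp only: G_sum[OF d])
  also have "\<dots> = bitprob p k d" using p by (auto simp: bitprob_def)
  finally show ?thesis .
qed

lemma Rv_coef: assumes hp: "\<forall>k<m. 0 < p k \<and> p k < 1" and k: "k < m"
  shows "(\<Sum>i<2^m. (1/2)^m * rho uniform_bits k (nbit i k) * gamma_coef m p i j * sqrt (symprob m p j))
     = symprob m p j * rho p k (nbit j k)"
proof -
  let ?F = "\<lambda>k' c. (1/2) * ((if k' = k then rho uniform_bits k c else 1) * G p k' c (nbit j k')) * sqrt (bitprob p k' (nbit j k'))"
  have "(\<Sum>i<2^m. (1/2)^m * rho uniform_bits k (nbit i k) * gamma_coef m p i j * sqrt (symprob m p j))
      = (\<Sum>i<2^m. \<Prod>k'<m. ?F k' (nbit i k'))"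
  proof (intro sum.cong refl)
    fix i
    have "(\<Prod>k'<m. ?F k' (nbit i k')) = (\<Prod>k'<m. (1/2::real)) * (\<Prod>k'<m. (if k' = k then rho uniform_bits k (nbit i k') else 1))
        * (\<Prod>k'<m. G p k' (nbit i k') (nbit j k')) * (\<Prod>k'<m. sqrt (bitprob p k' (nbit j k')))"
      by (simp only: prod.distrib mult.assoc)
    also have "(\<Prod>k'<m. (if k' = k then rho uniform_bits k (nbit i k') else 1)) = rho uniform_bits k (nbit i k)"
      using k by (simp add: prod.delta)
    finally show "(1/2)^m * rho uniform_bits k (nbit i k) * gamma_coef m p i j * sqrt (symprob m p j) = (\<Prod>k'<m. ?F k' (nbit i k'))"
      by (simp add: gamma_G sqrt_symprob)
  qed
  also have "\<dots> = (\<Prod>k'<m. ?F k' 0 + ?F k' 1)" by (rule sum_prod_bits)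
  also have "\<dots> = (\<Prod>k'<m. bitprob p k' (nbit j k') * (if k' = k then rho p k (nbit j k) else 1))"
  proof (intro prod.cong refl)
    fix k' assume "k' \<in> {..<m}"
    then have p: "0 < p k'" "p k' < 1" using hp by auto
    show "?F k' 0 + ?F k' 1 = bitprob p k' (nbit j k') * (if k' = k then rho p k (nbit j k) else 1)"
    proof (cases "k' = k")
      case True
      then show ?thesis using bit_factor[of p k' "nbit j k'", OF p nbit_cases] by (simp add: mult.assoc)
    next
      case False
      have "0 \<le> p k'" "p k' \<le> 1" using p by auto
      then show ?thesis using False bit_factor'[of p k' "nbit j k'", OF _ _ nbit_cases] by (simp add: mult.assoc)
    qed
  qed
  also have "\<dots> = symprob m p j * rho p k (nbit j k)"
    using k by (simp add: prod.distrib symprob_def prod.delta)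
  finally show ?thesis .
qed

lemma Rv_transform: assumes hp: "\<forall>k<m. 0 < p k \<and> p k < 1" and k: "k < m"
  shows "Rv m uniform_bits (transform m p x) k = Rv m p x k"
proof -
  have "Rv m uniform_bits (transform m p x) k
      = (\<Sum>i<2^m. \<Sum>j<2^m. ((1/2)^m * rho uniform_bits k (nbit i k) * gamma_coef m p i j * sqrt (symprob m p j)) *\<^sub>R x j)"
    by (simp add: Rv_def transform_def symprob_unif scaleR_sum_right mult.assoc)
  also have "\<dots> = (\<Sum>j<2^m. \<Sum>i<2^m. ((1/2)^m * rho uniform_bits k (nbit i k) * gamma_coef m p i j * sqrt (symprob m p j)) *\<^sub>R x j)"
    by (rule sum.swap)
  also have "\<dots> = (\<Sum>j<2^m. (\<Sum>i<2^m. (1/2)^m * rho uniform_bits k (nbit i k) * gamma_coef m p i j * sqrt (symprob m p j)) *\<^sub>R x j)"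
    by (simp add: scaleR_sum_left)
  also have "\<dots> = Rv m p x k"
    unfolding Rv_def by (simp add: Rv_coef[OF hp k])
  finally show ?thesis .
qed

context cst begin

lemma Q_Rv: assumes k: "k < m"
  shows "(\<Sum>u\<in>{0,1::nat}. bitprob p k u * (norm (cmean m p x k u - mean_sym m p x))\<^sup>2) = (norm (Rv m p x k))\<^sup>2"
proof -
  define S where "S u = (\<Sum>i\<in>{i. i < 2^m \<and> nbit i k = u}. symprob m p i *\<^sub>R x i)" for u
  define q where "q = p k"
  have q: "0 < q" "q < 1" using hp k by (auto simp: q_def)
  have split: "{..<(2::nat)^m} = {i. i < 2^m \<and> nbit i k = 0} \<union> {i. i < 2^m \<and> nbit i k = 1}"
    using nbit_cases by auto
  have disj: "{i. i < (2::nat)^m \<and> nbit i k = 0} \<inter> {i. i < 2^m \<and> nbit i k = 1} = {}" by auto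
  have sumsplit: "(\<Sum>i<2^m. g i) = (\<Sum>i\<in>{i. i < 2^m \<and> nbit i k = 0}. g i) + (\<Sum>i\<in>{i. i < 2^m \<and> nbit i k = 1}. g i)"
    for g :: "nat \<Rightarrow> real^'n"
    unfolding split by (rule sum.union_disjoint) (use disj in auto)
  have mean: "mean_sym m p x = S 0 + S 1" unfolding mean_sym_def S_def by (rule sumsplit)
  have cm: "cmean m p x k u = (1 / bitprob p k u) *\<^sub>R S u" for u
    unfolding cmean_def S_def by (simp add: scaleR_sum_right)
  have Rv: "Rv m p x k = rho p k 0 *\<^sub>R S 0 + rho p k 1 *\<^sub>R S 1"
  proof -
    have "Rv m p x k = (\<Sum>i\<in>{i. i < 2^m \<and> nbit i k = 0}. (symprob m p i * rho p k (nbit i k)) *\<^sub>R x i)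
        + (\<Sum>i\<in>{i. i < 2^m \<and> nbit i k = 1}. (symprob m p i * rho p k (nbit i k)) *\<^sub>R x i)"
      unfolding Rv_def by (rule sumsplit)
    also have "\<dots> = rho p k 0 *\<^sub>R S 0 + rho p k 1 *\<^sub>R S 1"
      unfolding S_def scaleR_sum_right by (simp add: mult.commute)
    finally show ?thesis .
  qed
  define W where "W = (1 - q) *\<^sub>R S 0 - q *\<^sub>R S 1"
  have bp: "bitprob p k 0 = q" "bitprob p k 1 = 1 - q" by (auto simp: bitprob_def q_def)
  have e0: "cmean m p x k 0 - mean_sym m p x = (1 / q) *\<^sub>R W"
    unfolding cm mean W_def bp using q by (simp add: vec_eq_iff field_simps)
  have e1: "cmean m p x k 1 - mean_sym m p x = (- 1 / (1 - q)) *\<^sub>R W"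
  proof -
    have r: "s1 / (1 - q) - (s0 + s1) = - (((1 - q) * s0 - q * s1) / (1 - q))" for s0 s1 :: real
      using q by (simp add: field_simps)
    show ?thesis unfolding cm mean W_def bp by (simp add: vec_eq_iff r)
  qed
  have a: "sqrt q > 0" "sqrt (1 - q) > 0" using q by auto
  have sq: "sqrt q * sqrt q = q" "sqrt (1 - q) * sqrt (1 - q) = 1 - q" using q by auto
  have eR: "Rv m p x k = (1 / (sqrt q * sqrt (1 - q))) *\<^sub>R W"
  proof -
    have r0: "rho p k 0 = sqrt (1 - q) / sqrt q" "rho p k 1 = - sqrt q / sqrt (1 - q)"
      by (auto simp: rho_def q_def)
    have "(1 / (sqrt q * sqrt (1 - q))) * (1 - q) = (1 / (sqrt q * sqrt (1 - q))) * (sqrt (1 - q) * sqrt (1 - q))"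
      by (simp only: sq)
    also have "\<dots> = sqrt (1 - q) / sqrt q" using a by (simp add: field_simps)
    finally have x0: "rho p k 0 = (1 / (sqrt q * sqrt (1 - q))) * (1 - q)" using r0 by simp
    have "(1 / (sqrt q * sqrt (1 - q))) * q = (1 / (sqrt q * sqrt (1 - q))) * (sqrt q * sqrt q)"
      by (simp only: sq)
    also have "\<dots> = sqrt q / sqrt (1 - q)" using a by (simp add: field_simps)
    finally have x1: "rho p k 1 = - (1 / (sqrt q * sqrt (1 - q))) * q" using r0 by simp
    have gen: "(E * (1 - q)) *\<^sub>R s0 + (- E * q) *\<^sub>R s1 = E *\<^sub>R ((1 - q) *\<^sub>R s0 - q *\<^sub>R s1)"
      for E and s0 s1 :: "real^'n" by (simp add: algebra_simps)
    show ?thesis unfolding Rv W_def x0 x1 by (rule gen)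
  qed
  have "(\<Sum>u\<in>{0,1::nat}. bitprob p k u * (norm (cmean m p x k u - mean_sym m p x))\<^sup>2)
      = q * (norm ((1 / q) *\<^sub>R W))\<^sup>2 + (1 - q) * (norm ((- 1 / (1 - q)) *\<^sub>R W))\<^sup>2"
    using e0 e1 bp by simp
  also have "\<dots> = (norm W)\<^sup>2 / (q * (1 - q))"
  proof -
    have q1: "1 - q \<noteq> 0" "q \<noteq> 0" using q by auto
    have r: "q * ((1 / q)\<^sup>2 * n) + (1 - q) * ((- 1 / (1 - q))\<^sup>2 * n) = n / (q * (1 - q))" for n
    proof -
      have g: "a * ((1 / a)\<^sup>2 * n) + b * ((- 1 / b)\<^sup>2 * n) = n * (a + b) / (a * b)" if "a \<noteq> 0" "b \<noteq> 0" for a b :: real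
        using that by (simp add: power2_eq_square field_simps)
      show ?thesis using g[OF q1(2) q1(1)] by simp
    qed
    show ?thesis by (simp only: norm_scaleR power_mult_distrib real_norm_def power2_abs r)
  qed
  also have "\<dots> = (norm (Rv m p x k))\<^sup>2"
    unfolding eR using a by (simp add: power2_eq_square field_simps sq)
  finally show ?thesis .
qed

end


lemma deriv_iff:
  fixes g :: "real \<Rightarrow> real"
  assumes g0: "g 0 = 0" and L: "((\<lambda>s. g s / s) \<longlongrightarrow> L) (at_right 0)"
  shows "(g has_real_derivative a) (at 0 within {0..}) \<longleftrightarrow> a = L"
proof -
  have "(g has_real_derivative a) (at 0 within {0..}) \<longleftrightarrow> ((\<lambda>s. g s / s) \<longlongrightarrow> a) (at_right 0)"
    unfolding has_field_derivative_iff at_within_Ici_at_right by (simp add: g0)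
  also have "\<dots> \<longleftrightarrow> a = L"
    using L tendsto_unique[OF trivial_limit_at_right_real] by blast
  finally show ?thesis .
qed

lemma gauss_ch_zero: "gauss_ch 0 h xv y = 0"
  unfolding gauss_ch_def by simp

lemma bicm_zero: "bicm_gmi m p x 0 HD = 0"
  by (simp add: bicm_gmi_def bit_mi_def cond_dens_def gauss_ch_zero)

lemma gmi_zero: "energy_sym m p x = 0 \<Longrightarrow> gmi_of_snr m p x EH2 HD = (\<lambda>_. 0)"
  by (simp add: fun_eq_iff gmi_of_snr_def bicm_zero)

lemma energy_nonneg: "\<forall>k<m. 0 \<le> p k \<and> p k \<le> 1 \<Longrightarrow> 0 \<le> energy_sym m p x"
  unfolding energy_sym_def by (intro sum_nonneg mult_nonneg_nonneg symprob_nonneg) auto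

theorem theorem6:
  fixes m :: nat and p :: "nat \<Rightarrow> real" and x :: "nat \<Rightarrow> real ^ 'n"
    and HD :: "(real ^ 'n) measure" and pH :: "real \<Rightarrow> real"
  assumes "m \<ge> 1"
    and "\<forall>k<m. 0 < p k \<and> p k < 1"
    and "prob_space HD" and "sets HD = sets borel"
    and "pH \<in> borel_measurable borel" and "\<forall>t. 0 \<le> pH t"
    and "\<forall>n. distr HD lborel (\<lambda>h. h $ n) = density lborel (\<lambda>t. ennreal (pH t))"
    and "integrable lborel (\<lambda>t. t\<^sup>2 * pH t)" and "sec_moment pH > 0"
  shows "mean_sym m p x = mean_sym m uniform_bits (transform m p x)
       \<and> energy_sym m p x = energy_sym m uniform_bits (transform m p x)
       \<and> (\<forall>a. low_gmi_alpha m p x (sec_moment pH) HD a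
              \<longleftrightarrow> low_gmi_alpha m uniform_bits (transform m p x) (sec_moment pH) HD a)"
proof -
  have hp01: "\<forall>k<m. 0 \<le> p k \<and> p k \<le> 1" using assms(2) by (auto intro: less_imp_le)
  have ME: "mean_sym m p x = mean_sym m uniform_bits (transform m p x)" by (rule mean_eq[OF hp01])
  have EE: "energy_sym m p x = energy_sym m uniform_bits (transform m p x)" by (rule energy_eq[OF hp01])
  interpret C1: cst m p by unfold_locales (rule assms(2))
  interpret C2: cst m uniform_bits by unfold_locales (simp add: uniform_bits_def)
  have AL: "low_gmi_alpha m p x (sec_moment pH) HD a
              \<longleftrightarrow> low_gmi_alpha m uniform_bits (transform m p x) (sec_moment pH) HD a" for a
  proof (cases "energy_sym m p x = 0")
    case True
    have z1: "gmi_of_snr m p x (sec_moment pH) HD = (\<lambda>_. 0)" by (rule gmi_zero[OF True])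
    have z2: "gmi_of_snr m uniform_bits (transform m p x) (sec_moment pH) HD = (\<lambda>_. 0)"
      by (rule gmi_zero) (use True EE in simp)
    have "((\<lambda>s. (\<lambda>_. 0::real) s / s) \<longlongrightarrow> 0) (at_right 0)" by simp
    from deriv_iff[of "\<lambda>_. 0", OF _ this] show ?thesis
      unfolding low_gmi_alpha_def z1 z2 by simp
  next
    case False
    then have Es: "energy_sym m p x > 0" using energy_nonneg[OF hp01, of x] by simp
    have Es2: "energy_sym m uniform_bits (transform m p x) > 0" using Es EE by simp
    interpret H: hdl HD pH by (intro hdl.intro assms(3-8))
    interpret F1: full m p HD pH x by unfold_locales
    interpret F2: full m uniform_bits HD pH "transform m p x" by unfold_locales
    have Q1: "F1.Qv = (\<Sum>k<m. (norm (Rv m p x k))\<^sup>2)"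
      unfolding F1.Qv_def by (intro sum.cong refl, rule C1.Q_Rv) simp
    have Q2: "F2.Qv = (\<Sum>k<m. (norm (Rv m p x k))\<^sup>2)"
      unfolding F2.Qv_def
    proof (intro sum.cong refl)
      fix k assume "k \<in> {..<m}"
      then have k: "k < m" by simp
      show "(\<Sum>u\<in>{0,1::nat}. bitprob uniform_bits k u * (norm (cmean m uniform_bits (transform m p x) k u - mean_sym m uniform_bits (transform m p x)))\<^sup>2)
          = (norm (Rv m p x k))\<^sup>2"
        unfolding C2.Q_Rv[OF k] Rv_transform[OF assms(2) k] ..
    qed
    have L1: "((\<lambda>s. gmi_of_snr m p x (sec_moment pH) HD s / s) \<longlongrightarrow> F1.Qv / (energy_sym m p x * ln 2)) (at_right 0)"
      by (rule F1.gmi_lim[OF Es assms(9)])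
    have L2: "((\<lambda>s. gmi_of_snr m uniform_bits (transform m p x) (sec_moment pH) HD s / s) \<longlongrightarrow> F1.Qv / (energy_sym m p x * ln 2)) (at_right 0)"
      using F2.gmi_lim[OF Es2 assms(9)] by (simp add: Q1 Q2 EE)
    have g1: "gmi_of_snr m p x (sec_moment pH) HD 0 = 0" by (simp add: gmi_of_snr_def)
    have g2: "gmi_of_snr m uniform_bits (transform m p x) (sec_moment pH) HD 0 = 0" by (simp add: gmi_of_snr_def)
    show ?thesis unfolding low_gmi_alpha_def deriv_iff[OF g1 L1] deriv_iff[OF g2 L2] ..
  qed
  show ?thesis using ME EE AL by simp
qed


end
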